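(* Let $\phi(x):=\max(0,x)$, $d\in\mathbb{N}$, $0<\lambda<1$, $0\le\epsilon<1$, $\epsilon_+:=1-\epsilon$, $\epsilon_-:=\lambda/2-\epsilon$. Define $r_1:=\epsilon_++\frac{\lambda^2}{3}(d-1)\epsilon_-$, $r_2:=\epsilon_-+\frac{\lambda^2}{3}\epsilon_++\frac{\lambda^2}{3}(d-2)\epsilon_-$, $r_3:=\epsilon_++\frac{\lambda}{2}(d-1)\epsilon_-$, $r_4:=\epsilon_-+\frac{\lambda}{2}\epsilon_++\frac{\lambda}{2}(d-2)\epsilon_-$, $r_5:=\frac{\lambda}{2}\epsilon_++\frac{\lambda}{2}\epsilon_-+\frac{\lambda^2}{4}(d-2)\epsilon_-$, $r_6:=\lambda\epsilon_-+\frac{\lambda^2}{4}\epsilon_++\frac{\lambda^2}{4}(d-3)\epsilon_-$, $r_7:=\epsilon_++(d-1)\epsilon_-$. For $d'\in\{0,\dots,d\}$ and $b\in\{0,1\}$ define $s_1:=br_7+r_3+(d'-1)r_4$, $s_2:=br_7+d'r_4$, $s_3:=br_3+r_1+(d'-1)r_5$, $s_4:=br_3+d'r_5$, $s_5:=br_4+r_2+r_5+(d'-2)r_6$, $s_6:=br_4+r_2+(d'-1)r_6$, $s_7:=br_4+r_5+(d'-1)r_6$, $s_8:=br_4+d'r_6$ (each a function of $(d',b)$), and $$\mathrm{score}(d',b):=d'\phi(s_1)+(d-d')\phi(s_2)+d'\phi(s_3)+(d-d')\phi(s_4)+d'(d'-1)\phi(s_5)+d'(d-d')\phi(s_6)+d'(d-d')\phi(s_7)+(d-d')(d-d'-1)\phi(s_8).$$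 Let $(d',b_{d+1})$ be a global maximizer of $\mathrm{score}$ over $d'\in\{0,\dots,d\}$, $b_{d+1}\in\{0,1\}$. Set $\bm b^\top:=(\underbrace{1,\dots,1}_{d'},\underbrace{0,\dots,0}_{d-d'},b_{d+1})$, $\bm P:=\begin{bmatrix}\bm 0_{d,d+1}\\ \bm b^\top\end{bmatrix}$, $\bm Q:=\begin{bmatrix}\bm A&\bm 0_{d+1}\end{bmatrix}$ with $\bm A\in\{0,1\}^{(d+1)\times d}$ given, for $j\in[d+1]$, $k\in[d]$, by - $A_{j,k}=\mathbb 1\big[b_{d+1}r_7+\mathbb 1[k\le d']r_3+(d'-\mathbb 1[k\le d'])r_4\ge0\big]$ if $j=d+1$; - $A_{j,k}=\mathbb 1\big[b_{d+1}r_3+\mathbb 1[j\le d']r_1+(d'-\mathbb 1[j\le d'])r_5\ge0\big]$ if $j\ne d+1$ and $j=k$; - $A_{j,k}=\mathbb 1\big[b_{d+1}r_4+\mathbb 1[j\le d']r_2+\mathbb 1[k\le d']r_5+(d'-\mathbb 1[j\le d']-\mathbb 1[k\le d'])r_6\ge0\big]$ if $j\ne d+1$ and $j\ne k$. Then $(\bm P,\bm Q)$ is a global minimizer of the adversarial pretraining problem $$\min_{\bm P,\bm Q\in[0,1]^{(d+1)\times(d+1)}}\ \mathbb{E}_{c\sim U([d]),\,\{(\bm x_n,y_n)\}_{n=1}^{N+1}\overset{\text{i.i.d.}}{\sim}\mathcal{D}^{\rm tr}_c}\Big[\max_{\|\bm\Delta\|_\infty\le\epsilon}-y_{N+1}[f(\bm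 Z;\bm P,\bm Q)]_{d+1,N+1}\Big].$$
   Context: For $n\in\mathbb{N}$, $[n]:=\{1,\dots,n\}$; $\mathbb 1[\cdot]$ is the indicator. $U(\mathcal S)$ is the uniform distribution on a set $\mathcal S$. $\bm 1_{a}$, $\bm 0_a$, $\bm 0_{a,b}$, $\bm I_a$ denote all-ones/all-zeros vectors and matrices and the identity. $N\in\mathbb{N}$ is fixed. Training distributions: for $c\in[d]$ and $0<\lambda<1$, a sample $(\bm x,y)\sim\mathcal{D}^{\rm tr}_c$ with $\bm x\in\mathbb{R}^d$ is generated as follows: $y\sim U(\{\pm1\})$, $x_c=y$, and for each $i\ne c$, $x_i\sim U([0,\lambda])$ if $y=1$ and $x_i\sim U([-\lambda,0])$ if $y=-1$; given $y$, the coordinates $x_i$ are mutually independent. Transformer: given demonstrations $(\bm x_1,y_1),\dots,(\bm x_N,y_N)$, a query $\bm x_{N+1}\in\mathbb{R}^d$ and a perturbation $\bm\Delta\in\mathbb{R}^d$, let $\bm Z\in\mathbb{R}^{(d+1)\times(N+1)}$ be the matrix whose $n$-th column is $(\bm x_n^\top, y_n)^\top$ for $n\le N$ and whose last column is $((\bm x_{N+1}+\bm\Delta)^\top,0)^\top$. Let $\bm M:=\begin{bmatrix}\bm I_N&0\\0&0\end{bmatrix}\in\mathbb{R}^{(N+1)\times(N+1)}$ and, for $\bm P,\bm Q\in\mathbb{R}^{(d+1)\times(d+1)}$, $f(\bm Z;\bm P,\bm Q):=\frac1N\bm P\bm Z\bm M\bm Z^\top\bm Q\bm Z$. $[\cdot]_{d+1,N+1}$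 denotes the $(d+1,N+1)$ entry. *)

theory Defs
  imports "HOL-Probability.Probability"
begin

definition relu :: "real \<Rightarrow> real" where "relu x = max 0 x"

definition epp :: "real \<Rightarrow> real" where "epp eps = 1 - eps"
definition epm :: "real \<Rightarrow> real \<Rightarrow> real" where "epm lam eps = lam / 2 - eps"

definition r1 :: "nat \<Rightarrow> real \<Rightarrow> real \<Rightarrow> real" where
  "r1 d lam eps = epp eps + lam^2/3 * (real d - 1) * epm lam eps"
definition r2 :: "nat \<Rightarrow> real \<Rightarrow> real \<Rightarrow> real" where
  "r2 d lam eps = epm lam eps + lam^2/3 * epp eps + lam^2/3 * (real d - 2) * epm lam eps"
definition r3 :: "nat \<Rightarrow> real \<Rightarrow> real \<Rightarrow> real" where
  "r3 d lam eps = epp eps + lam/2 * (real d - 1) * epm lam eps"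
definition r4 :: "nat \<Rightarrow> real \<Rightarrow> real \<Rightarrow> real" where
  "r4 d lam eps = epm lam eps + lam/2 * epp eps + lam/2 * (real d - 2) * epm lam eps"
definition r5 :: "nat \<Rightarrow> real \<Rightarrow> real \<Rightarrow> real" where
  "r5 d lam eps = lam/2 * epp eps + lam/2 * epm lam eps + lam^2/4 * (real d - 2) * epm lam eps"
definition r6 :: "nat \<Rightarrow> real \<Rightarrow> real \<Rightarrow> real" where
  "r6 d lam eps = lam * epm lam eps + lam^2/4 * epp eps + lam^2/4 * (real d - 3) * epm lam eps"
definition r7 :: "nat \<Rightarrow> real \<Rightarrow> real \<Rightarrow> real" where
  "r7 d lam eps = epp eps + (real d - 1) * epm lam eps"

definition score :: "nat \<Rightarrow> real \<Rightarrow> real \<Rightarrow> nat \<Rightarrow> nat \<Rightarrow> real" where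
  "score d lam eps d' b =
    (let D = real d; e = real d'; bb = real b;
         s1 = bb * r7 d lam eps + r3 d lam eps + (e - 1) * r4 d lam eps;
         s2 = bb * r7 d lam eps + e * r4 d lam eps;
         s3 = bb * r3 d lam eps + r1 d lam eps + (e - 1) * r5 d lam eps;
         s4 = bb * r3 d lam eps + e * r5 d lam eps;
         s5 = bb * r4 d lam eps + r2 d lam eps + r5 d lam eps + (e - 2) * r6 d lam eps;
         s6 = bb * r4 d lam eps + r2 d lam eps + (e - 1) * r6 d lam eps;
         s7 = bb * r4 d lam eps + r5 d lam eps + (e - 1) * r6 d lam eps;
         s8 = bb * r4 d lam eps + e * r6 d lam eps
     in e * relu s1 + (D - e) * relu s2 + e * relu s3 + (D - e) * relu s4
        + e * (e - 1) * relu s5 + e * (D - e) * relu s6 + e * (D - e) * relu s7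
        + (D - e) * (D - e - 1) * relu s8)"

text \<open>Matrices are functions nat => nat => real, indexed 1-based; only the entries
  in the relevant index ranges matter.\<close>

definition Pmat :: "nat \<Rightarrow> nat \<Rightarrow> nat \<Rightarrow> nat \<Rightarrow> nat \<Rightarrow> real" where
  "Pmat d d' b = (\<lambda>i j. if i = d + 1 then
       (if j \<le> d' then 1 else if j \<le> d then 0 else real b) else 0)"

definition Amat :: "nat \<Rightarrow> real \<Rightarrow> real \<Rightarrow> nat \<Rightarrow> nat \<Rightarrow> nat \<Rightarrow> nat \<Rightarrow> real" where
  "Amat d lam eps d' b = (\<lambda>j k.
     if j = d + 1 then
       of_bool (real b * r7 d lam eps + of_bool (k \<le> d') * r3 d lam eps
                + (real d' - of_bool (k \<le> d')) * r4 d lam eps \<ge> 0)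
     else if j = k then
       of_bool (real b * r3 d lam eps + of_bool (j \<le> d') * r1 d lam eps
                + (real d' - of_bool (j \<le> d')) * r5 d lam eps \<ge> 0)
     else
       of_bool (real b * r4 d lam eps + of_bool (j \<le> d') * r2 d lam eps
                + of_bool (k \<le> d') * r5 d lam eps
                + (real d' - of_bool (j \<le> d') - of_bool (k \<le> d')) * r6 d lam eps \<ge> 0))"

definition Qmat :: "nat \<Rightarrow> real \<Rightarrow> real \<Rightarrow> nat \<Rightarrow> nat \<Rightarrow> nat \<Rightarrow> nat \<Rightarrow> real" where
  "Qmat d lam eps d' b = (\<lambda>j k. if k \<le> d then Amat d lam eps d' b j k else 0)"

definition in01 :: "nat \<Rightarrow> (nat \<Rightarrow> nat \<Rightarrow> real) \<Rightarrow> bool" where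
  "in01 d P \<longleftrightarrow> (\<forall>i\<in>{1..d+1}. \<forall>j\<in>{1..d+1}. 0 \<le> P i j \<and> P i j \<le> 1)"

definition mmul :: "nat \<Rightarrow> (nat \<Rightarrow> nat \<Rightarrow> real) \<Rightarrow> (nat \<Rightarrow> nat \<Rightarrow> real) \<Rightarrow> nat \<Rightarrow> nat \<Rightarrow> real" where
  "mmul k A B = (\<lambda>i j. \<Sum>l\<in>{1..k}. A i l * B l j)"

definition transp_mat :: "(nat \<Rightarrow> nat \<Rightarrow> real) \<Rightarrow> nat \<Rightarrow> nat \<Rightarrow> real" where
  "transp_mat A = (\<lambda>i j. A j i)"

definition Mmask :: "nat \<Rightarrow> nat \<Rightarrow> nat \<Rightarrow> real" where
  "Mmask N = (\<lambda>i j. if i = j \<and> i \<le> N then 1 else 0)"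

definition Zmat :: "nat \<Rightarrow> nat \<Rightarrow> (nat \<Rightarrow> (nat \<Rightarrow> real) \<times> real) \<Rightarrow> (nat \<Rightarrow> real) \<Rightarrow> nat \<Rightarrow> nat \<Rightarrow> real" where
  "Zmat d N S \<Delta> = (\<lambda>i n. if n \<le> N then (if i \<le> d then fst (S n) i else snd (S n))
                          else (if i \<le> d then fst (S (N+1)) i + \<Delta> i else 0))"

text \<open>f(Z;P,Q) = 1/N * P Z M Z^T Q Z.\<close>
definition tf :: "nat \<Rightarrow> nat \<Rightarrow> (nat \<Rightarrow> nat \<Rightarrow> real) \<Rightarrow> (nat \<Rightarrow> nat \<Rightarrow> real) \<Rightarrow> (nat \<Rightarrow> nat \<Rightarrow> real) \<Rightarrow> nat \<Rightarrow> nat \<Rightarrow> real" where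
  "tf d N P Q Z = (\<lambda>i j. (1 / real N) *
     mmul (d+1) (mmul (d+1) (mmul (N+1) (mmul (N+1) (mmul (d+1) P Z) (Mmask N)) (transp_mat Z)) Q) Z i j)"

definition adv_loss :: "nat \<Rightarrow> nat \<Rightarrow> real \<Rightarrow> (nat \<Rightarrow> nat \<Rightarrow> real) \<Rightarrow> (nat \<Rightarrow> nat \<Rightarrow> real)
    \<Rightarrow> (nat \<Rightarrow> (nat \<Rightarrow> real) \<times> real) \<Rightarrow> real" where
  "adv_loss d N eps P Q S =
     (SUP \<Delta>\<in>{\<Delta>. \<forall>i\<in>{1..d}. \<bar>\<Delta> i\<bar> \<le> eps}.
        - snd (S (N+1)) * tf d N P Q (Zmat d N S \<Delta>) (d+1) (N+1))"

definition Dtr :: "nat \<Rightarrow> real \<Rightarrow> nat \<Rightarrow> ((nat \<Rightarrow> real) \<times> real) measure" where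
  "Dtr d lam c = measure_pmf (pmf_of_set {-1, 1::real}) \<bind>
     (\<lambda>y. distr (PiM {1..d} (\<lambda>i. if i = c then return borel y
                                 else if y = 1 then uniform_measure lborel {0..lam}
                                 else uniform_measure lborel {-lam..0}))
                (PiM {1..d} (\<lambda>_. borel) \<Otimes>\<^sub>M borel) (\<lambda>x. (x, y)))"

definition pretrain_obj :: "nat \<Rightarrow> nat \<Rightarrow> real \<Rightarrow> real \<Rightarrow> (nat \<Rightarrow> nat \<Rightarrow> real) \<Rightarrow> (nat \<Rightarrow> nat \<Rightarrow> real) \<Rightarrow> real" where
  "pretrain_obj d N lam eps P Q =
     measure_pmf.expectation (pmf_of_set {1..d})
       (\<lambda>c. lebesgue_integral (PiM {1..N+1} (\<lambda>_. Dtr d lam c)) (adv_loss d N eps P Q))"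

end

theory Submission
  imports Defs
begin


lemma card_minus1: assumes "k \<in> A" "finite A" shows "real (card (A - {k})) = real (card A) - 1"
proof -
  have h: "Suc (card (A-{k})) = card A" by (rule card_Suc_Diff1[OF assms(2,1)])
  have "real (card A) = real (card (A-{k})) + 1" by (subst h[symmetric]) simp
  then show ?thesis by linarith
qed

lemma sum_if1:
  fixes X Z :: real
  assumes "k \<in> A" "finite A"
  shows "(\<Sum>c\<in>A. if c = k then X else Z) = X + (real (card A) - 1) * Z"
proof -
  have "(\<Sum>c\<in>A. if c = k then X else Z) = (if k = k then X else Z) + (\<Sum>c\<in>A-{k}. if c = k then X else Z)"
    by (rule sum.remove) (use assms in auto)
  also have "(\<Sum>c\<in>A-{k}. if c = k then X else Z) = (\<Sum>c\<in>A-{k}. Z)"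
    by (rule sum.cong) auto
  also have "(\<Sum>c\<in>A-{k}. Z) = real (card (A-{k})) * Z" by simp
  also have "real (card (A-{k})) = real (card A) - 1" using assms by (rule card_minus1)
  finally show ?thesis by simp
qed

lemma sum_if2:
  fixes X Y Z :: real
  assumes "k \<in> A" "j \<in> A" "j \<noteq> k" "finite A"
  shows "(\<Sum>c\<in>A. if c = k then X else if c = j then Y else Z) = X + Y + (real (card A) - 2) * Z"
proof -
  have "(\<Sum>c\<in>A. if c = k then X else if c = j then Y else Z) = (if k = k then X else if k = j then Y else Z) + (\<Sum>c\<in>A-{k}. if c = k then X else if c = j then Y else Z)"
    by (rule sum.remove) (use assms in auto)
  also have "(\<Sum>c\<in>A-{k}. if c = k then X else if c = j then Y else Z) = (\<Sum>c\<in>A-{k}. if c = j then Y else Z)"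
    by (rule sum.cong) auto
  also have "(\<Sum>c\<in>A-{k}. if c = j then Y else Z) = Y + (real (card (A-{k})) - 1) * Z"
    using assms by (intro sum_if1) auto
  also have "real (card (A-{k})) = real (card A) - 1" using assms(1,4) by (rule card_minus1)
  finally show ?thesis by (simp add: algebra_simps)
qed

lemma sum_if3:
  fixes X Y W Z :: real
  assumes "k \<in> A" "j \<in> A" "i \<in> A" "j \<noteq> k" "i \<noteq> k" "i \<noteq> j" "finite A"
  shows "(\<Sum>c\<in>A. if c = k then X else if c = j then Y else if c = i then W else Z) = X + Y + W + (real (card A) - 3) * Z"
proof -
  have "(\<Sum>c\<in>A. if c = k then X else if c = j then Y else if c = i then W else Z) = (if k = k then X else if k = j then Y else if k = i then W else Z) + (\<Sum>c\<in>A-{k}. if c = k then X else if c = j then Y else if c = i then W else Z)"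
    by (rule sum.remove) (use assms in auto)
  also have "(\<Sum>c\<in>A-{k}. if c = k then X else if c = j then Y else if c = i then W else Z) = (\<Sum>c\<in>A-{k}. if c = j then Y else if c = i then W else Z)"
    by (rule sum.cong) auto
  also have "(\<Sum>c\<in>A-{k}. if c = j then Y else if c = i then W else Z) = Y + W + (real (card (A-{k})) - 2) * Z"
    using assms by (intro sum_if2) auto
  also have "real (card (A-{k})) = real (card A) - 1" using assms(1,7) by (rule card_minus1)
  finally show ?thesis by (simp add: algebra_simps)
qed


definition av :: "nat \<Rightarrow> real \<Rightarrow> nat \<Rightarrow> nat \<Rightarrow> real" where
  "av d lam c i = (if i = c \<or> i = d+1 then 1 else lam/2)"
definition qv :: "nat \<Rightarrow> real \<Rightarrow> nat \<Rightarrow> nat \<Rightarrow> real" where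
  "qv d lam c i = (if i = c \<or> i = d+1 then 1 else lam^2/3)"
definition muv :: "nat \<Rightarrow> real \<Rightarrow> nat \<Rightarrow> nat \<Rightarrow> nat \<Rightarrow> real" where
  "muv d lam c i m = (if i = m then qv d lam c i else av d lam c i * av d lam c m)"
definition gv :: "nat \<Rightarrow> real \<Rightarrow> real \<Rightarrow> nat \<Rightarrow> nat \<Rightarrow> real" where
  "gv d lam eps c l = av d lam c l - eps"
definition kap :: "nat \<Rightarrow> real \<Rightarrow> real \<Rightarrow> nat \<Rightarrow> nat \<Rightarrow> nat \<Rightarrow> real" where
  "kap d lam eps i m l = (\<Sum>c\<in>{1..d}. gv d lam eps c l * muv d lam c i m)"

context
  fixes d :: nat and lam eps :: real
  assumes d1: "d \<ge> 1"
begin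

lemma kap1: assumes "k \<in> {1..d}" shows "kap d lam eps (d+1) (d+1) k = r7 d lam eps"
proof -
  have "kap d lam eps (d+1) (d+1) k = (\<Sum>c\<in>{1..d}. if c = k then epp eps else epm lam eps)"
    unfolding kap_def using assms
    by (intro sum.cong) (auto simp: gv_def muv_def av_def qv_def epp_def epm_def)
  also have "\<dots> = r7 d lam eps" using assms by (subst sum_if1) (simp_all add: r7_def power2_eq_square field_simps)
  finally show ?thesis .
qed

lemma kap2: assumes "k \<in> {1..d}" "j \<in> {1..d}"
  shows "kap d lam eps (d+1) j k = (if j = k then r3 d lam eps else r4 d lam eps)"
    "kap d lam eps j (d+1) k = (if j = k then r3 d lam eps else r4 d lam eps)"
proof -
  have s: "kap d lam eps j (d+1) k = kap d lam eps (d+1) j k"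
    unfolding kap_def by (intro sum.cong) (auto simp: muv_def mult.commute)
  have h: "kap d lam eps (d+1) j k = (if j = k then r3 d lam eps else r4 d lam eps)"
  proof (cases "j = k")
    case True
    have "kap d lam eps (d+1) j k = (\<Sum>c\<in>{1..d}. if c = k then epp eps else epm lam eps * (lam/2))"
      unfolding kap_def using assms True
      by (intro sum.cong) (auto simp: gv_def muv_def av_def qv_def epp_def epm_def)
    also have "\<dots> = r3 d lam eps" using assms by (subst sum_if1) (simp_all add: r3_def power2_eq_square field_simps)
    finally show ?thesis using True by simp
  next
    case False
    have "kap d lam eps (d+1) j k = (\<Sum>c\<in>{1..d}. if c = k then epp eps * (lam/2) else if c = j then epm lam eps else epm lam eps * (lam/2))"
      unfolding kap_def using assms False
      by (intro sum.cong) (auto simp: gv_def muv_def av_def qv_def epp_def epm_def)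
    also have "\<dots> = r4 d lam eps" using assms False by (subst sum_if2) (simp_all add: r4_def power2_eq_square field_simps)
    finally show ?thesis using False by simp
  qed
  show "kap d lam eps (d+1) j k = (if j = k then r3 d lam eps else r4 d lam eps)" by (rule h)
  show "kap d lam eps j (d+1) k = (if j = k then r3 d lam eps else r4 d lam eps)"
    unfolding s by (rule h)
qed

lemma kap3: assumes "k \<in> {1..d}" "j \<in> {1..d}" "i \<in> {1..d}"
  shows "kap d lam eps i j k = (if j = k then (if i = j then r1 d lam eps else r5 d lam eps)
     else (if i = j then r2 d lam eps else if i = k then r5 d lam eps else r6 d lam eps))"
proof -
  consider "j = k" "i = j" | "j = k" "i \<noteq> j" | "j \<noteq> k" "i = j" | "j \<noteq> k" "i = k" | "j \<noteq> k" "i \<noteq> j" "i \<noteq> k" by blast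
  then show ?thesis
  proof cases
    case 1
    have "kap d lam eps i j k = (\<Sum>c\<in>{1..d}. if c = k then epp eps else epm lam eps * (lam^2/3))"
      unfolding kap_def using assms 1
      by (intro sum.cong) (auto simp: gv_def muv_def av_def qv_def epp_def epm_def)
    also have "\<dots> = r1 d lam eps" using assms by (subst sum_if1) (simp_all add: r1_def power2_eq_square field_simps)
    finally show ?thesis using 1 by simp
  next
    case 2
    have "kap d lam eps i j k = (\<Sum>c\<in>{1..d}. if c = k then epp eps * (lam/2) else if c = i then epm lam eps * (lam/2) else epm lam eps * (lam/2 * (lam/2)))"
      unfolding kap_def using assms 2
      by (intro sum.cong) (auto simp: gv_def muv_def av_def qv_def epp_def epm_def)
    also have "\<dots> = r5 d lam eps" using assms 2 by (subst sum_if2) (simp_all add: r5_def power2_eq_square field_simps)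
    finally show ?thesis using 2 by simp
  next
    case 3
    have "kap d lam eps i j k = (\<Sum>c\<in>{1..d}. if c = k then epp eps * (lam^2/3) else if c = j then epm lam eps else epm lam eps * (lam^2/3))"
      unfolding kap_def using assms 3
      by (intro sum.cong) (auto simp: gv_def muv_def av_def qv_def epp_def epm_def)
    also have "\<dots> = r2 d lam eps" using assms 3 by (subst sum_if2) (simp_all add: r2_def power2_eq_square field_simps)
    finally show ?thesis using 3 by simp
  next
    case 4
    have "kap d lam eps i j k = (\<Sum>c\<in>{1..d}. if c = k then epp eps * (lam/2) else if c = j then epm lam eps * (lam/2) else epm lam eps * (lam/2 * (lam/2)))"
      unfolding kap_def using assms 4
      by (intro sum.cong) (auto simp: gv_def muv_def av_def qv_def epp_def epm_def)
    also have "\<dots> = r5 d lam eps" using assms 4 by (subst sum_if2) (simp_all add: r5_def power2_eq_square field_simps)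
    finally show ?thesis using 4 by simp
  next
    case 5
    have "kap d lam eps i j k = (\<Sum>c\<in>{1..d}. if c = k then epp eps * (lam/2 * (lam/2)) else if c = j then epm lam eps * (lam/2) else if c = i then epm lam eps * (lam/2) else epm lam eps * (lam/2 * (lam/2)))"
      unfolding kap_def using assms 5
      by (intro sum.cong) (auto simp: gv_def muv_def av_def qv_def epp_def epm_def)
    also have "\<dots> = r6 d lam eps" using assms 5 by (subst sum_if3) (simp_all add: r6_def power2_eq_square field_simps)
    finally show ?thesis using 5 by simp
  qed
qed

end


definition Kc :: "nat \<Rightarrow> real \<Rightarrow> real \<Rightarrow> (nat \<Rightarrow> real) \<Rightarrow> nat \<Rightarrow> nat \<Rightarrow> real" where
  "Kc d lam eps p m l = (\<Sum>i\<in>{1..d+1}. p i * kap d lam eps i m l)"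

definition Fv :: "nat \<Rightarrow> real \<Rightarrow> real \<Rightarrow> (nat \<Rightarrow> real) \<Rightarrow> real" where
  "Fv d lam eps p = (\<Sum>l\<in>{1..d}. \<Sum>m\<in>{1..d+1}. relu (Kc d lam eps p m l))"

definition pv :: "nat \<Rightarrow> nat set \<Rightarrow> nat \<Rightarrow> nat \<Rightarrow> real" where
  "pv d S b i = (if i = d+1 then real b else if i \<in> S then 1 else 0)"

lemma sum_ifS1:
  fixes X Z :: real
  assumes "finite S"
  shows "(\<Sum>i\<in>S. if i = k then X else Z) = of_bool (k \<in> S) * X + (real (card S) - of_bool (k \<in> S)) * Z"
proof (cases "k \<in> S")
  case True
  then show ?thesis using sum_if1[OF True assms] by simp
next
  case False
  have "(\<Sum>i\<in>S. if i = k then X else Z) = (\<Sum>i\<in>S. Z)" using False by (intro sum.cong) auto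
  then show ?thesis using False by simp
qed

lemma sum_ifS2:
  fixes X Y Z :: real
  assumes "finite S" "j \<noteq> k"
  shows "(\<Sum>i\<in>S. if i = j then X else if i = k then Y else Z) =
    of_bool (j \<in> S) * X + of_bool (k \<in> S) * Y + (real (card S) - of_bool (j \<in> S) - of_bool (k \<in> S)) * Z"
proof (cases "j \<in> S")
  case True
  show ?thesis
  proof (cases "k \<in> S")
    case True2: True
    have "(\<Sum>i\<in>S. if i = j then X else if i = k then Y else Z) = (\<Sum>i\<in>S. if i = k then Y else if i = j then X else Z)"
      using assms by (intro sum.cong) auto
    also have "\<dots> = Y + X + (real (card S) - 2) * Z" using True True2 assms by (intro sum_if2) auto
    finally show ?thesis using True True2 by (simp add: algebra_simps)
  next
    case False2: False
    have "(\<Sum>i\<in>S. if i = j then X else if i = k then Y else Z) = (\<Sum>i\<in>S. if i = j then X else Z)"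
      using False2 by (intro sum.cong) auto
    also have "\<dots> = X + (real (card S) - 1) * Z" using True assms by (intro sum_if1) auto
    finally show ?thesis using True False2 by (simp add: algebra_simps)
  qed
next
  case False
  have "(\<Sum>i\<in>S. if i = j then X else if i = k then Y else Z) = (\<Sum>i\<in>S. if i = k then Y else Z)"
    using False by (intro sum.cong) auto
  also have "\<dots> = of_bool (k \<in> S) * Y + (real (card S) - of_bool (k \<in> S)) * Z"
    using assms by (intro sum_ifS1) auto
  finally show ?thesis using False by (simp add: algebra_simps)
qed

lemma cnt:
  fixes X Y :: real
  assumes "finite A" "S \<subseteq> A"
  shows "(\<Sum>x\<in>A. if x \<in> S then X else Y) = real (card S) * X + (real (card A) - real (card S)) * Y"
proof -
  have "(\<Sum>x\<in>A. if x \<in> S then X else Y) = (\<Sum>x\<in>S. X) + (\<Sum>x\<in>A-S. Y)"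
    using assms by (simp add: sum.If_cases Int_absorb1 Diff_eq)
  also have "\<dots> = real (card S) * X + real (card (A - S)) * Y" by simp
  also have "card (A - S) = card A - card S" using assms by (intro card_Diff_subset) (auto intro: finite_subset)
  also have "real (card A - card S) = real (card A) - real (card S)"
    using assms by (intro of_nat_diff card_mono) auto
  finally show ?thesis .
qed

context
  fixes d :: nat and lam eps :: real and S :: "nat set" and b :: nat
  assumes d1: "d \<ge> 1" and S: "S \<subseteq> {1..d}"
begin

lemma finS: "finite S" using S by (rule finite_subset) simp

lemma Kc_pv: assumes "k \<in> {1..d}"
  shows "Kc d lam eps (pv d S b) m k = real b * kap d lam eps (d+1) m k + (\<Sum>i\<in>S. kap d lam eps i m k)"
proof -
  have e: "{1..d+1} = insert (d+1) {1..d}" by auto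
  have "Kc d lam eps (pv d S b) m k = real b * kap d lam eps (d+1) m k + (\<Sum>i\<in>{1..d}. pv d S b i * kap d lam eps i m k)"
    unfolding Kc_def e by (simp add: pv_def)
  also have "(\<Sum>i\<in>{1..d}. pv d S b i * kap d lam eps i m k) = (\<Sum>i\<in>{1..d}. if i \<in> S then kap d lam eps i m k else 0)"
    by (intro sum.cong) (auto simp: pv_def)
  also have "\<dots> = (\<Sum>i\<in>{1..d} \<inter> S. kap d lam eps i m k)"
    by (simp add: sum.inter_restrict)
  also have "{1..d} \<inter> S = S" using S by auto
  finally show ?thesis .
qed

lemma Kc_y: assumes "k \<in> {1..d}"
  shows "Kc d lam eps (pv d S b) (d+1) k = real b * r7 d lam eps + of_bool (k \<in> S) * r3 d lam eps
           + (real (card S) - of_bool (k \<in> S)) * r4 d lam eps"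
proof -
  have "(\<Sum>i\<in>S. kap d lam eps i (d+1) k) = (\<Sum>i\<in>S. if i = k then r3 d lam eps else r4 d lam eps)"
    using S assms by (intro sum.cong) (auto simp: kap2[OF d1] kap2[OF d1, simplified])
  also have "\<dots> = of_bool (k \<in> S) * r3 d lam eps + (real (card S) - of_bool (k \<in> S)) * r4 d lam eps"
    by (rule sum_ifS1[OF finS])
  finally show ?thesis using assms by (simp add: Kc_pv kap1[OF d1] kap1[OF d1, simplified])
qed

lemma Kc_diag: assumes "k \<in> {1..d}"
  shows "Kc d lam eps (pv d S b) k k = real b * r3 d lam eps + of_bool (k \<in> S) * r1 d lam eps
           + (real (card S) - of_bool (k \<in> S)) * r5 d lam eps"
proof -
  have "(\<Sum>i\<in>S. kap d lam eps i k k) = (\<Sum>i\<in>S. if i = k then r1 d lam eps else r5 d lam eps)"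
    using S assms by (intro sum.cong) (auto simp: kap3[OF d1])
  also have "\<dots> = of_bool (k \<in> S) * r1 d lam eps + (real (card S) - of_bool (k \<in> S)) * r5 d lam eps"
    by (rule sum_ifS1[OF finS])
  finally show ?thesis using assms by (simp add: Kc_pv kap2[OF d1] kap2[OF d1, simplified])
qed

lemma Kc_off: assumes "k \<in> {1..d}" "j \<in> {1..d}" "j \<noteq> k"
  shows "Kc d lam eps (pv d S b) j k = real b * r4 d lam eps + of_bool (j \<in> S) * r2 d lam eps
           + of_bool (k \<in> S) * r5 d lam eps
           + (real (card S) - of_bool (j \<in> S) - of_bool (k \<in> S)) * r6 d lam eps"
proof -
  have "(\<Sum>i\<in>S. kap d lam eps i j k) = (\<Sum>i\<in>S. if i = j then r2 d lam eps else if i = k then r5 d lam eps else r6 d lam eps)"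
    using S assms by (intro sum.cong) (auto simp: kap3[OF d1])
  also have "\<dots> = of_bool (j \<in> S) * r2 d lam eps + of_bool (k \<in> S) * r5 d lam eps
           + (real (card S) - of_bool (j \<in> S) - of_bool (k \<in> S)) * r6 d lam eps"
    by (rule sum_ifS2[OF finS assms(3)])
  finally show ?thesis using assms by (simp add: Kc_pv kap2[OF d1] kap2[OF d1, simplified])
qed

end


context
  fixes d :: nat and lam eps :: real and S :: "nat set" and b :: nat
  assumes d1: "d \<ge> 1" and S: "S \<subseteq> {1..d}"
begin

lemma cardS: "card S \<le> d" using card_mono[OF _ S] by simp

lemma partA: "(\<Sum>l\<in>{1..d}. relu ((Kc d lam eps (pv d S b)) (d+1) l)) =
   (real (card S)) * relu ((real b) * (r7 d lam eps) + (r3 d lam eps) + ((real (card S)) - 1) * (r4 d lam eps)) + ((real d) - (real (card S))) * relu ((real b) * (r7 d lam eps) + (real (card S)) * (r4 d lam eps))"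
proof -
  have "(\<Sum>l\<in>{1..d}. relu ((Kc d lam eps (pv d S b)) (d+1) l)) = (\<Sum>l\<in>{1..d}. if l \<in> S then relu ((real b) * (r7 d lam eps) + (r3 d lam eps) + ((real (card S)) - 1) * (r4 d lam eps)) else relu ((real b) * (r7 d lam eps) + (real (card S)) * (r4 d lam eps)))"
    by (intro sum.cong refl) (simp add: Kc_y[OF d1 S] Kc_y[OF d1 S, simplified])
  also have "\<dots> = (real (card S)) * relu ((real b) * (r7 d lam eps) + (r3 d lam eps) + ((real (card S)) - 1) * (r4 d lam eps)) + ((real d) - (real (card S))) * relu ((real b) * (r7 d lam eps) + (real (card S)) * (r4 d lam eps))"
    using S by (subst cnt) auto
  finally show ?thesis .
qed

lemma partB: "(\<Sum>l\<in>{1..d}. relu ((Kc d lam eps (pv d S b)) l l)) =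
   (real (card S)) * relu ((real b) * (r3 d lam eps) + (r1 d lam eps) + ((real (card S)) - 1) * (r5 d lam eps)) + ((real d) - (real (card S))) * relu ((real b) * (r3 d lam eps) + (real (card S)) * (r5 d lam eps))"
proof -
  have "(\<Sum>l\<in>{1..d}. relu ((Kc d lam eps (pv d S b)) l l)) = (\<Sum>l\<in>{1..d}. if l \<in> S then relu ((real b) * (r3 d lam eps) + (r1 d lam eps) + ((real (card S)) - 1) * (r5 d lam eps)) else relu ((real b) * (r3 d lam eps) + (real (card S)) * (r5 d lam eps)))"
    by (intro sum.cong refl) (simp add: Kc_diag[OF d1 S])
  also have "\<dots> = (real (card S)) * relu ((real b) * (r3 d lam eps) + (r1 d lam eps) + ((real (card S)) - 1) * (r5 d lam eps)) + ((real d) - (real (card S))) * relu ((real b) * (r3 d lam eps) + (real (card S)) * (r5 d lam eps))"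
    using S by (subst cnt) auto
  finally show ?thesis .
qed

definition "X5 = relu ((real b) * (r4 d lam eps) + (r2 d lam eps) + (r5 d lam eps) + ((real (card S)) - 2) * (r6 d lam eps))"
definition "X6 = relu ((real b) * (r4 d lam eps) + (r2 d lam eps) + ((real (card S)) - 1) * (r6 d lam eps))"
definition "X7 = relu ((real b) * (r4 d lam eps) + (r5 d lam eps) + ((real (card S)) - 1) * (r6 d lam eps))"
definition "X8 = relu ((real b) * (r4 d lam eps) + (real (card S)) * (r6 d lam eps))"

lemma partC1: assumes l: "l \<in> {1..d}"
  shows "(\<Sum>m\<in>{1..d}-{l}. relu ((Kc d lam eps (pv d S b)) m l)) =
    (if l \<in> S then ((real (card S)) - 1) * X5 + ((real d) - (real (card S))) * X7 else (real (card S)) * X6 + ((real d) - (real (card S)) - 1) * X8)"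
proof (cases "l \<in> S")
  case True
  have "(\<Sum>m\<in>{1..d}-{l}. relu ((Kc d lam eps (pv d S b)) m l)) = (\<Sum>m\<in>{1..d}-{l}. if m \<in> S - {l} then X5 else X7)"
    using True l by (intro sum.cong refl) (auto simp: Kc_off[OF d1 S] X5_def X7_def algebra_simps)
  also have "\<dots> = real (card (S-{l})) * X5 + (real (card ({1..d}-{l})) - real (card (S-{l}))) * X7"
    using S by (intro cnt) auto
  also have "real (card (S-{l})) = (real (card S)) - 1" using True finS[OF d1 S] by (intro card_minus1)
  also have "real (card ({1..d}-{l})) = (real d) - 1" using l by (subst card_minus1) auto
  finally show ?thesis using True by (simp add: algebra_simps)
next
  case False
  have "(\<Sum>m\<in>{1..d}-{l}. relu ((Kc d lam eps (pv d S b)) m l)) = (\<Sum>m\<in>{1..d}-{l}. if m \<in> S then X6 else X8)"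
    using False l by (intro sum.cong refl) (auto simp: Kc_off[OF d1 S] X6_def X8_def algebra_simps)
  also have "\<dots> = (real (card S)) * X6 + (real (card ({1..d}-{l})) - (real (card S))) * X8"
    using S False by (intro cnt) auto
  also have "real (card ({1..d}-{l})) = (real d) - 1" using l by (subst card_minus1) auto
  finally show ?thesis using False by (simp add: algebra_simps)
qed

lemma partC: "(\<Sum>l\<in>{1..d}. \<Sum>m\<in>{1..d}-{l}. relu ((Kc d lam eps (pv d S b)) m l)) =
   (real (card S)) * ((real (card S)) - 1) * X5 + (real (card S)) * ((real d) - (real (card S))) * X6 + (real (card S)) * ((real d) - (real (card S))) * X7 + ((real d) - (real (card S))) * ((real d) - (real (card S)) - 1) * X8"
proof -
  have "(\<Sum>l\<in>{1..d}. \<Sum>m\<in>{1..d}-{l}. relu ((Kc d lam eps (pv d S b)) m l)) = (\<Sum>l\<in>{1..d}. if l \<in> S then ((real (card S)) - 1) * X5 + ((real d) - (real (card S))) * X7 else (real (card S)) * X6 + ((real d) - (real (card S)) - 1) * X8)"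
    by (intro sum.cong refl partC1)
  also have "\<dots> = (real (card S)) * (((real (card S)) - 1) * X5 + ((real d) - (real (card S))) * X7) + ((real d) - (real (card S))) * ((real (card S)) * X6 + ((real d) - (real (card S)) - 1) * X8)"
    using S by (subst cnt) auto
  finally show ?thesis by (simp add: algebra_simps)
qed

lemma Fv_pv: "Fv d lam eps (pv d S b) = score d lam eps (card S) b"
proof -
  have e: "{1..d+1} = insert (d+1) {1..d}" by auto
  have "Fv d lam eps (pv d S b) = (\<Sum>l\<in>{1..d}. relu ((Kc d lam eps (pv d S b)) (d+1) l) + (relu ((Kc d lam eps (pv d S b)) l l) + (\<Sum>m\<in>{1..d}-{l}. relu ((Kc d lam eps (pv d S b)) m l))))"
    unfolding Fv_def e
  proof (intro sum.cong refl)
    fix l assume l: "l \<in> {1..d}"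
    have "(\<Sum>m\<in>insert (d + 1) {1..d}. relu ((Kc d lam eps (pv d S b)) m l)) = relu ((Kc d lam eps (pv d S b)) (d+1) l) + (\<Sum>m\<in>{1..d}. relu ((Kc d lam eps (pv d S b)) m l))"
      by simp
    also have "(\<Sum>m\<in>{1..d}. relu ((Kc d lam eps (pv d S b)) m l)) = relu ((Kc d lam eps (pv d S b)) l l) + (\<Sum>m\<in>{1..d}-{l}. relu ((Kc d lam eps (pv d S b)) m l))"
      using l by (intro sum.remove) auto
    finally show "(\<Sum>m\<in>insert (d + 1) {1..d}. relu ((Kc d lam eps (pv d S b)) m l)) = relu ((Kc d lam eps (pv d S b)) (d+1) l) + (relu ((Kc d lam eps (pv d S b)) l l) + (\<Sum>m\<in>{1..d}-{l}. relu ((Kc d lam eps (pv d S b)) m l)))" .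
  qed
  also have "\<dots> = (\<Sum>l\<in>{1..d}. relu ((Kc d lam eps (pv d S b)) (d+1) l)) + ((\<Sum>l\<in>{1..d}. relu ((Kc d lam eps (pv d S b)) l l)) + (\<Sum>l\<in>{1..d}. \<Sum>m\<in>{1..d}-{l}. relu ((Kc d lam eps (pv d S b)) m l)))"
    by (simp add: sum.distrib)
  also have "\<dots> = score d lam eps (card S) b"
    unfolding partA partB partC score_def Let_def X5_def X6_def X7_def X8_def
    by (simp add: algebra_simps)
  finally show ?thesis .
qed

end


lemma relu_convex:
  assumes "0 \<le> t" "t \<le> 1"
  shows "relu ((1-t) * a + t * c) \<le> (1-t) * relu a + t * relu c"
proof -
  have h1: "(1-t) * a \<le> (1-t) * relu a" using assms by (intro mult_left_mono) (auto simp: relu_def)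
  have h2: "t * c \<le> t * relu c" using assms by (intro mult_left_mono) (auto simp: relu_def)
  have h3: "0 \<le> (1-t) * relu a + t * relu c" using assms by (intro add_nonneg_nonneg mult_nonneg_nonneg) (auto simp: relu_def)
  show ?thesis unfolding relu_def[of "(1-t) * a + t * c"] using h1 h2 h3 by simp
qed

lemma Kc_upd: "Kc d lam eps (p(i:=t)) m l = (1-t) * Kc d lam eps (p(i:=0)) m l + t * Kc d lam eps (p(i:=1)) m l"
proof -
  have h: "\<And>j. (p(i:=t)) j = (1-t) * (p(i:=0)) j + t * (p(i:=1)) j" by (auto simp: algebra_simps)
  have "Kc d lam eps (p(i:=t)) m l = (\<Sum>j\<in>{1..d+1}. ((1-t) * (p(i:=0)) j + t * (p(i:=1)) j) * kap d lam eps j m l)"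
    unfolding Kc_def h by (rule refl)
  also have "\<dots> = (1-t) * Kc d lam eps (p(i:=0)) m l + t * Kc d lam eps (p(i:=1)) m l"
    unfolding Kc_def by (simp only: distrib_right sum.distrib sum_distrib_left mult.assoc)
  finally show ?thesis .
qed

lemma Fv_upd:
  assumes "0 \<le> t" "t \<le> 1"
  shows "Fv d lam eps (p(i:=t)) \<le> max (Fv d lam eps (p(i:=0))) (Fv d lam eps (p(i:=1)))"
proof -
  have "Fv d lam eps (p(i:=t)) \<le> (\<Sum>l\<in>{1..d}. \<Sum>m\<in>{1..d+1}. (1-t) * relu (Kc d lam eps (p(i:=0)) m l) + t * relu (Kc d lam eps (p(i:=1)) m l))"
    unfolding Fv_def Kc_upd[of d lam eps p i t]
    by (intro sum_mono relu_convex assms)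
  also have "\<dots> = (1-t) * Fv d lam eps (p(i:=0)) + t * Fv d lam eps (p(i:=1))"
    unfolding Fv_def by (simp only: sum.distrib sum_distrib_left)
  also have "\<dots> \<le> (1-t) * max (Fv d lam eps (p(i:=0))) (Fv d lam eps (p(i:=1))) + t * max (Fv d lam eps (p(i:=0))) (Fv d lam eps (p(i:=1)))"
    using assms by (intro add_mono mult_left_mono) auto
  also have "\<dots> = max (Fv d lam eps (p(i:=0))) (Fv d lam eps (p(i:=1)))" by (simp add: algebra_simps)
  finally show ?thesis .
qed

definition boxp :: "nat \<Rightarrow> (nat \<Rightarrow> real) \<Rightarrow> bool" where
  "boxp d p \<longleftrightarrow> (\<forall>i\<in>{1..d+1}. 0 \<le> p i \<and> p i \<le> 1)"
definition vertp :: "nat \<Rightarrow> (nat \<Rightarrow> real) \<Rightarrow> bool" where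
  "vertp d p \<longleftrightarrow> (\<forall>i\<in>{1..d+1}. p i = 0 \<or> p i = 1)"

lemma to_vertex:
  "boxp d p \<Longrightarrow> \<exists>q. vertp d q \<and> Fv d lam eps p \<le> Fv d lam eps q"
proof (induction "card {i\<in>{1..d+1}. p i \<noteq> 0 \<and> p i \<noteq> 1}" arbitrary: p rule: less_induct)
  case less
  show ?case
  proof (cases "{i\<in>{1..d+1}. p i \<noteq> 0 \<and> p i \<noteq> 1} = {}")
    case True
    then have "vertp d p" unfolding vertp_def by auto
    then show ?thesis by auto
  next
    case False
    then obtain i where i: "i \<in> {1..d+1}" "p i \<noteq> 0" "p i \<noteq> 1" by auto
    define B where "B = {i\<in>{1..d+1}. p i \<noteq> 0 \<and> p i \<noteq> 1}"
    have fB: "finite B" unfolding B_def by auto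
    have iB: "i \<in> B" using i unfolding B_def by auto
    have lt: "card (B - {i}) < card B" using fB iB by (meson card_Diff1_less)
    have ex: "\<exists>q. vertp d q \<and> Fv d lam eps (p(i:=s)) \<le> Fv d lam eps q" if s: "s = 0 \<or> s = 1" for s :: real
    proof -
      have eq: "{j\<in>{1..d+1}. (p(i:=s)) j \<noteq> 0 \<and> (p(i:=s)) j \<noteq> 1} = B - {i}"
        using s unfolding B_def by auto
      have bx: "boxp d (p(i:=s))" using less.prems s unfolding boxp_def by auto
      have "card {j\<in>{1..d+1}. (p(i:=s)) j \<noteq> 0 \<and> (p(i:=s)) j \<noteq> 1} < card {i\<in>{1..d+1}. p i \<noteq> 0 \<and> p i \<noteq> 1}"
        unfolding eq using lt unfolding B_def .
      then show ?thesis using less.hyps bx by blast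
    qed
    obtain q0 where q0: "vertp d q0" "Fv d lam eps (p(i:=0)) \<le> Fv d lam eps q0" using ex[of 0] by auto
    obtain q1 where q1: "vertp d q1" "Fv d lam eps (p(i:=1)) \<le> Fv d lam eps q1" using ex[of 1] by auto
    have pi: "0 \<le> p i" "p i \<le> 1" using less.prems i unfolding boxp_def by auto
    have "Fv d lam eps p = Fv d lam eps (p(i:=p i))" by simp
    also have "\<dots> \<le> max (Fv d lam eps (p(i:=0))) (Fv d lam eps (p(i:=1)))" by (rule Fv_upd[OF pi])
    finally have "Fv d lam eps p \<le> max (Fv d lam eps (p(i:=0))) (Fv d lam eps (p(i:=1)))" .
    then show ?thesis
    proof (cases "Fv d lam eps (p(i:=0)) \<le> Fv d lam eps (p(i:=1))")
      case True
      then show ?thesis using q1 \<open>Fv d lam eps p \<le> max (Fv d lam eps (p(i:=0))) (Fv d lam eps (p(i:=1)))\<close>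
        by (intro exI[of _ q1]) (auto simp: max_def)
    next
      case False
      then show ?thesis using q0 \<open>Fv d lam eps p \<le> max (Fv d lam eps (p(i:=0))) (Fv d lam eps (p(i:=1)))\<close>
        by (intro exI[of _ q0]) (auto simp: max_def)
    qed
  qed
qed

lemma Kc_cong: "(\<And>i. i \<in> {1..d+1} \<Longrightarrow> p i = q i) \<Longrightarrow> Kc d lam eps p m l = Kc d lam eps q m l"
  unfolding Kc_def by (intro sum.cong) auto

lemma Fv_cong: assumes h: "\<And>i. i \<in> {1..d+1} \<Longrightarrow> p i = q i" shows "Fv d lam eps p = Fv d lam eps q"
  unfolding Fv_def by (intro sum.cong refl arg_cong[where f=relu] Kc_cong h)

lemma vertex_score:
  assumes "d \<ge> 1" "vertp d q"
  shows "\<exists>S bt. S \<subseteq> {1..d} \<and> bt \<le> (1::nat) \<and> Fv d lam eps q = score d lam eps (card S) bt"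
proof -
  define S where "S = {i\<in>{1..d}. q i = 1}"
  define bt :: nat where "bt = (if q (d+1) = 1 then 1 else 0)"
  have "Fv d lam eps q = Fv d lam eps (pv d S bt)"
  proof (rule Fv_cong)
    fix i assume i: "i \<in> {1..d+1}"
    then have "q i = 0 \<or> q i = 1" using assms(2) unfolding vertp_def by blast
    then show "q i = pv d S bt i" using i by (cases "i = d+1") (auto simp: pv_def S_def bt_def)
  qed
  also have "\<dots> = score d lam eps (card S) bt" by (rule Fv_pv[OF assms(1)]) (auto simp: S_def)
  finally show ?thesis by (intro exI[of _ S] exI[of _ bt]) (auto simp: S_def bt_def)
qed


definition Lval :: "nat \<Rightarrow> real \<Rightarrow> real \<Rightarrow> (nat \<Rightarrow> nat \<Rightarrow> real) \<Rightarrow> (nat \<Rightarrow> nat \<Rightarrow> real) \<Rightarrow> real" where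
  "Lval d lam eps P Q = - (1 / real d) * (\<Sum>l\<in>{1..d}. \<Sum>m\<in>{1..d+1}. Q m l * Kc d lam eps (P (d+1)) m l)"

lemma mul_le_relu: assumes "0 \<le> q" "q \<le> (1::real)" shows "q * x \<le> relu x"
proof (cases "x \<ge> 0")
  case True
  then have "q * x \<le> 1 * x" using assms by (intro mult_right_mono) auto
  then show ?thesis using True by (simp add: relu_def)
next
  case False
  then have "q * x \<le> 0" using assms by (simp add: mult_nonneg_nonpos)
  then show ?thesis by (simp add: relu_def)
qed

lemma ofbool_relu: "of_bool (x \<ge> 0) * x = relu (x::real)"
  by (simp add: relu_def)

lemma alg_main:
  fixes d d' b :: nat and lam eps :: real and P' Q' :: "nat \<Rightarrow> nat \<Rightarrow> real"
  assumes d1: "d \<ge> 1" and dd: "d' \<le> d" and b1: "b \<le> 1"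
    and H: "\<forall>d''\<le>d. \<forall>b''\<le>1. score d lam eps d'' b'' \<le> score d lam eps d' b"
    and P': "in01 d P'" and Q': "in01 d Q'"
  shows "Lval d lam eps (Pmat d d' b) (Qmat d lam eps d' b) \<le> Lval d lam eps P' Q'"
proof -
  define S0 where "S0 = {1..d'}"
  have S0: "S0 \<subseteq> {1..d}" using dd unfolding S0_def by auto
  have cS0: "card S0 = d'" unfolding S0_def by simp
  have Kst: "Kc d lam eps (Pmat d d' b (d+1)) m l = Kc d lam eps (pv d S0 b) m l" for m l
    using dd by (intro Kc_cong) (auto simp: Pmat_def pv_def S0_def)
  have mem: "l \<in> S0 \<longleftrightarrow> l \<le> d'" if "l \<in> {1..d}" for l using that unfolding S0_def by auto
  have QK: "Qmat d lam eps d' b m l * Kc d lam eps (Pmat d d' b (d+1)) m l = relu (Kc d lam eps (Pmat d d' b (d+1)) m l)"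
    if l: "l \<in> {1..d}" and m: "m \<in> {1..d+1}" for m l
  proof -
    have "Qmat d lam eps d' b m l = of_bool (Kc d lam eps (pv d S0 b) m l \<ge> 0)"
    proof (cases "m = d+1")
      case True
      then show ?thesis using l unfolding Qmat_def Amat_def
        by (simp add: Kc_y[OF d1 S0 l] Kc_y[OF d1 S0 l, simplified] mem[OF l] cS0)
    next
      case False
      then have m': "m \<in> {1..d}" using m by auto
      show ?thesis
      proof (cases "m = l")
        case True
        then show ?thesis using l False unfolding Qmat_def Amat_def
          by (simp add: Kc_diag[OF d1 S0 l] mem[OF l] cS0)
      next
        case False2: False
        then show ?thesis using l False unfolding Qmat_def Amat_def
          by (simp add: Kc_off[OF d1 S0 l m' False2] mem[OF l] mem[OF m'] cS0)
      qed
    qed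
    then show ?thesis unfolding Kst by (simp add: ofbool_relu)
  qed
  have star: "(\<Sum>l\<in>{1..d}. \<Sum>m\<in>{1..d+1}. Qmat d lam eps d' b m l * Kc d lam eps (Pmat d d' b (d+1)) m l)
      = score d lam eps d' b"
  proof -
    have "(\<Sum>l\<in>{1..d}. \<Sum>m\<in>{1..d+1}. Qmat d lam eps d' b m l * Kc d lam eps (Pmat d d' b (d+1)) m l)
       = Fv d lam eps (Pmat d d' b (d+1))"
      unfolding Fv_def by (intro sum.cong refl QK) auto
    also have "\<dots> = Fv d lam eps (pv d S0 b)" unfolding Fv_def Kst ..
    also have "\<dots> = score d lam eps d' b" using Fv_pv[OF d1 S0] cS0 by simp
    finally show ?thesis .
  qed
  have "(\<Sum>l\<in>{1..d}. \<Sum>m\<in>{1..d+1}. Q' m l * Kc d lam eps (P' (d+1)) m l) \<le> Fv d lam eps (P' (d+1))"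
    unfolding Fv_def using Q' unfolding in01_def
    by (intro sum_mono mul_le_relu) auto
  moreover have "boxp d (P' (d+1))" using P' unfolding in01_def boxp_def by auto
  then obtain q where q: "vertp d q" "Fv d lam eps (P' (d+1)) \<le> Fv d lam eps q"
    using to_vertex by blast
  obtain S bt where Sbt: "S \<subseteq> {1..d}" "bt \<le> (1::nat)" "Fv d lam eps q = score d lam eps (card S) bt"
    using vertex_score[OF d1 q(1)] by blast
  have "card S \<le> d" using card_mono[OF _ Sbt(1)] by simp
  then have "score d lam eps (card S) bt \<le> score d lam eps d' b" using H Sbt(2) by blast
  ultimately have "(\<Sum>l\<in>{1..d}. \<Sum>m\<in>{1..d+1}. Q' m l * Kc d lam eps (P' (d+1)) m l) \<le> score d lam eps d' b"
    using q(2) Sbt(3) by linarith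
  then show ?thesis unfolding Lval_def star using d1
    by (simp add: divide_simps)
qed


definition clip :: "real \<Rightarrow> real" where "clip t = max (-1) (min 1 t)"

definition compd :: "real \<Rightarrow> nat \<Rightarrow> real \<Rightarrow> nat \<Rightarrow> real measure" where
  "compd lam c y i = (if i = c then return borel y else if y = 1 then uniform_measure lborel {0..lam}
                      else uniform_measure lborel {-lam..0})"
definition Piy :: "nat \<Rightarrow> real \<Rightarrow> nat \<Rightarrow> real \<Rightarrow> (nat \<Rightarrow> real) measure" where
  "Piy d lam c y = PiM {1..d} (compd lam c y)"
definition Km :: "nat \<Rightarrow> ((nat \<Rightarrow> real) \<times> real) measure" where
  "Km d = PiM {1..d} (\<lambda>_. borel) \<Otimes>\<^sub>M borel"
definition kern :: "nat \<Rightarrow> real \<Rightarrow> nat \<Rightarrow> real \<Rightarrow> ((nat \<Rightarrow> real) \<times> real) measure" where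
  "kern d lam c y = distr (Piy d lam c y) (Km d) (\<lambda>x. (x, y))"

lemma Dtr_eq: "Dtr d lam c = measure_pmf (pmf_of_set {-1, 1}) \<bind> kern d lam c"
  unfolding Dtr_def kern_def Piy_def compd_def Km_def by (rule refl)

lemma measurable_clip[measurable]: "clip \<in> borel_measurable borel"
  unfolding clip_def by measurable

lemma abs_clip: "\<bar>clip t\<bar> \<le> 1" unfolding clip_def by auto

lemma clip_id: "\<bar>t\<bar> \<le> 1 \<Longrightarrow> clip t = t" unfolding clip_def by auto

context
  fixes lam :: real
  assumes lam0: "0 < lam"
begin

lemma prob_comp: "prob_space (compd lam c y i)"
  unfolding compd_def using lam0
  by (auto intro!: prob_space_return prob_space_uniform_measure)

lemma sets_comp: "sets (compd lam c y i) = sets borel"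
  unfolding compd_def by auto

lemma sets_Piy: "sets (Piy d lam c y) = sets (PiM {1..d} (\<lambda>_. borel))"
  unfolding Piy_def by (intro sets_PiM_cong) (auto simp: sets_comp)

lemma prob_Piy: "prob_space (Piy d lam c y)"
  unfolding Piy_def by (intro prob_space_PiM prob_comp)

lemma meas_pair: "(\<lambda>x. (x, y)) \<in> measurable (Piy d lam c y) (Km d)"
  unfolding Km_def
  by (intro measurable_Pair measurable_const measurable_ident_sets[OF sets_Piy]) simp

lemma prob_kern: "prob_space (kern d lam c y)"
  unfolding kern_def by (intro prob_space.prob_space_distr prob_Piy meas_pair)

lemma sets_kern: "sets (kern d lam c y) = sets (Km d)"
  unfolding kern_def by simp

lemma kern_meas: "kern d lam c \<in> measurable (measure_pmf p) (subprob_algebra (Km d))"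
  using prob_kern sets_kern
  by (auto simp: space_subprob_algebra prob_space_imp_subprob_space)

lemma prob_D: "prob_space (Dtr d lam c)"
  unfolding Dtr_eq
  by (intro prob_space.prob_space_bind[OF prob_space_measure_pmf, where S="Km d"] AE_I2 prob_kern kern_meas)

lemma sets_D: "sets (Dtr d lam c) = sets (Km d)"
  unfolding Dtr_eq by (rule sets_bind_measurable[OF kern_meas]) simp

end


definition good :: "nat \<Rightarrow> (nat \<Rightarrow> real) \<times> real \<Rightarrow> bool" where
  "good d w \<longleftrightarrow> snd w \<in> {-1, 1} \<and> (\<forall>i\<in>{1..d}. 0 \<le> snd w * fst w i \<and> \<bar>fst w i\<bar> \<le> 1)"

lemma pred_good[measurable]: "Measurable.pred (Km d) (good d)"
  unfolding Km_def good_def by measurable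

context
  fixes lam :: real
  assumes lam0: "0 < lam" and lam1: "lam < 1"
begin

lemma comp_AE: assumes y: "y \<in> {-1, 1}"
  shows "AE t in compd lam c y i. 0 \<le> y * t \<and> \<bar>t\<bar> \<le> 1"
proof (cases "i = c")
  case True
  have m: "Measurable.pred borel (\<lambda>t. 0 \<le> y * t \<and> \<bar>t\<bar> \<le> 1)" by measurable
  have e: "compd lam c y i = return borel y" using True by (simp add: compd_def)
  show ?thesis unfolding e using y by (subst AE_return[OF _ m]) auto
next
  case False
  show ?thesis
  proof (cases "y = 1")
    case True
    have e: "compd lam c y i = uniform_measure lborel {0..lam}" using True False by (simp add: compd_def)
    show ?thesis unfolding e using True lam0 lam1
      by (subst AE_uniform_measure) (auto intro!: AE_I2)
  next
    case False2: False
    then have y1: "y = -1" using y by auto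
    have e: "compd lam c y i = uniform_measure lborel {-lam..0}" using False False2 by (simp add: compd_def)
    show ?thesis unfolding e using y1 lam0 lam1
      by (subst AE_uniform_measure) (auto intro!: AE_I2)
  qed
qed

lemma AE_Piy: assumes y: "y \<in> {-1, 1}"
  shows "AE x in Piy d lam c y. good d (x, y)"
proof -
  have "AE x in Piy d lam c y. \<forall>i\<in>{1..d}. 0 \<le> y * x i \<and> \<bar>x i\<bar> \<le> 1"
    unfolding Piy_def
    by (intro AE_finite_allI AE_PiM_component[where P="\<lambda>t. 0 \<le> y * t \<and> \<bar>t\<bar> \<le> 1"] prob_comp[OF lam0] comp_AE y) auto
  then show ?thesis using y unfolding good_def by auto
qed

lemma AE_D: "AE w in Dtr d lam c. good d w"
  unfolding Dtr_eq
  apply (subst AE_bind[OF kern_meas[OF lam0] pred_good])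
  apply (subst AE_measure_pmf_iff)
  apply (intro ballI)
  apply (unfold kern_def)
  apply (subst AE_distr_iff[OF meas_pair[OF lam0]])
   apply simp
  apply (rule AE_Piy)
  apply simp
  done

lemma integral_D:
  fixes h :: "(nat \<Rightarrow> real) \<times> real \<Rightarrow> real" and B :: real
  assumes h[measurable]: "h \<in> borel_measurable (Km d)" and B: "\<And>w. w \<in> space (Km d) \<Longrightarrow> \<bar>h w\<bar> \<le> B"
  shows "integral\<^sup>L (Dtr d lam c) h =
    (integral\<^sup>L (Piy d lam c (-1)) (\<lambda>x. h (x, -1)) + integral\<^sup>L (Piy d lam c 1) (\<lambda>x. h (x, 1))) / 2"
proof -
  have "integral\<^sup>L (Dtr d lam c) h = \<integral>y. integral\<^sup>L (kern d lam c y) h \<partial>measure_pmf (pmf_of_set {-1, 1})"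
    unfolding Dtr_eq
    apply (rule integral_bind[where B'=1 and B=B and K="Km d"])
        apply (rule h)
       apply (erule B)
      apply (rule kern_meas[OF lam0])
     apply (rule prob_space.finite_measure, rule prob_space_measure_pmf)
    apply (auto intro!: AE_I2 simp: prob_space.emeasure_space_1[OF prob_kern[OF lam0]])
    done
  also have "\<dots> = (\<Sum>y\<in>{-1, 1}. integral\<^sup>L (kern d lam c y) h) / 2"
    by (subst integral_pmf_of_set) auto
  also have "\<dots> = (integral\<^sup>L (Piy d lam c (-1)) (\<lambda>x. h (x, -1)) + integral\<^sup>L (Piy d lam c 1) (\<lambda>x. h (x, 1))) / 2"
    unfolding kern_def by (simp add: integral_distr[OF meas_pair[OF lam0] h])
  finally show ?thesis .
qed

end


lemma prod_delta2:
  fixes a b :: "'i \<Rightarrow> real"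
  assumes "finite I" "i \<in> I" "j \<in> I" "i \<noteq> j"
  shows "(\<Prod>k\<in>I. if k = i then a k else if k = j then b k else 1) = a i * b j"
proof -
  have "(\<Prod>k\<in>I. if k = i then a k else if k = j then b k else 1) = (\<Prod>k\<in>I. (if k = i then a k else 1) * (if k = j then b k else 1))"
    using assms(4) by (intro prod.cong) auto
  also have "\<dots> = (\<Prod>k\<in>I. if k = i then a k else 1) * (\<Prod>k\<in>I. if k = j then b k else 1)"
    by (rule prod.distrib)
  also have "\<dots> = a i * b j" using assms by (simp add: prod.delta)
  finally show ?thesis .
qed

lemma PiM_int1:
  fixes f :: "'b \<Rightarrow> real"
  assumes I: "finite I" "i \<in> I" and Pk: "\<And>k. prob_space (M k)" and f: "integrable (M i) f"
  shows "(\<integral>x. f (x i) \<partial>PiM I M) = integral\<^sup>L (M i) f"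
proof -
  interpret product_prob_space M using Pk by (simp add: product_prob_space_def product_sigma_finite_def prob_space_imp_sigma_finite product_prob_space_axioms_def)
  define F where "F k = (\<lambda>t. if k = i then f t else 1)" for k
  have int: "integrable (M k) (F k)" if "k \<in> I" for k
    unfolding F_def using f by (cases "k = i") (auto intro: finite_measure.integrable_const[OF prob_space.finite_measure[OF Pk]] simp: Pk)
  have "(\<integral>x. (\<Prod>k\<in>I. F k (x k)) \<partial>PiM I M) = (\<Prod>k\<in>I. integral\<^sup>L (M k) (F k))"
    by (rule product_integral_prod[OF I(1) int])
  moreover have "(\<lambda>x. \<Prod>k\<in>I. F k (x k)) = (\<lambda>x. f (x i))"
    using I by (simp add: F_def prod.delta)
  moreover have "(\<Prod>k\<in>I. integral\<^sup>L (M k) (F k)) = (\<Prod>k\<in>I. if k = i then integral\<^sup>L (M i) f else 1)"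
    by (intro prod.cong refl) (auto simp: F_def prob_space.prob_space[OF Pk])
  ultimately show ?thesis using I by (simp add: prod.delta)
qed

lemma PiM_int2:
  fixes f g :: "'b \<Rightarrow> real"
  assumes I: "finite I" "i \<in> I" "j \<in> I" "i \<noteq> j" and Pk: "\<And>k. prob_space (M k)"
    and f: "integrable (M i) f" and g: "integrable (M j) g"
  shows "(\<integral>x. f (x i) * g (x j) \<partial>PiM I M) = integral\<^sup>L (M i) f * integral\<^sup>L (M j) g"
proof -
  interpret product_prob_space M using Pk by (simp add: product_prob_space_def product_sigma_finite_def prob_space_imp_sigma_finite product_prob_space_axioms_def)
  define F where "F k = (\<lambda>t. if k = i then f t else if k = j then g t else 1)" for k
  have int: "integrable (M k) (F k)" if "k \<in> I" for k
    unfolding F_def using f g I(4) by (cases "k = i"; cases "k = j") (auto intro: finite_measure.integrable_const[OF prob_space.finite_measure[OF Pk]] simp: Pk)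
  have "(\<integral>x. (\<Prod>k\<in>I. F k (x k)) \<partial>PiM I M) = (\<Prod>k\<in>I. integral\<^sup>L (M k) (F k))"
    by (rule product_integral_prod[OF I(1) int])
  moreover have "(\<lambda>x. \<Prod>k\<in>I. F k (x k)) = (\<lambda>x. f (x i) * g (x j))"
  proof
    fix x show "(\<Prod>k\<in>I. F k (x k)) = f (x i) * g (x j)"
      unfolding F_def using prod_delta2[OF I, of "\<lambda>k. f (x k)" "\<lambda>k. g (x k)"] by simp
  qed
  moreover have "(\<Prod>k\<in>I. integral\<^sup>L (M k) (F k)) = (\<Prod>k\<in>I. if k = i then integral\<^sup>L (M i) f else if k = j then integral\<^sup>L (M j) g else 1)"
    using I(4) by (intro prod.cong refl) (auto simp: F_def prob_space.prob_space[OF Pk])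
  ultimately show ?thesis using prod_delta2[OF I, of "\<lambda>_. integral\<^sup>L (M i) f" "\<lambda>_. integral\<^sup>L (M j) g"] by simp
qed

lemma integral_unif_pow:
  fixes a b :: real
  assumes ab: "a < b"
  shows "integral\<^sup>L (uniform_measure lborel {a..b}) (\<lambda>x. x ^ k) = (b ^ Suc k - a ^ Suc k) / (Suc k * (b - a))"
proof -
  have q: "1 / ennreal (b - a) = ennreal (1/(b-a))" using divide_ennreal[of 1 "b-a"] ab by simp
  have dens: "uniform_measure lborel {a..b} = density lborel (\<lambda>x. ennreal (indicator {a..b} x / (b - a)))"
    unfolding uniform_measure_def using ab
    by (intro density_cong) (auto simp: indicator_def q)
  have "integral\<^sup>L (uniform_measure lborel {a..b}) (\<lambda>x. x ^ k) = (\<integral>x. (indicator {a..b} x / (b - a)) *\<^sub>R x ^ k \<partial>lborel)"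
    unfolding dens using ab by (subst integral_density) auto
  also have "\<dots> = (\<integral>x. x ^ k * indicator {a..b} x \<partial>lborel) / (b - a)"
    by (simp add: mult.commute)
  also have "\<dots> = (b ^ Suc k - a ^ Suc k) / Suc k / (b - a)"
    using ab by (subst integral_power) auto
  finally show ?thesis by simp
qed


definition zz :: "nat \<Rightarrow> (nat \<Rightarrow> real) \<times> real \<Rightarrow> nat \<Rightarrow> real" where
  "zz d w i = (if i \<le> d then fst w i else snd w)"
definition zc :: "nat \<Rightarrow> (nat \<Rightarrow> real) \<times> real \<Rightarrow> nat \<Rightarrow> real" where
  "zc d w i = clip (zz d w i)"

context
  fixes lam :: real
  assumes lam0: "0 < lam" and lam1: "lam < 1"
begin

lemma clip_meas_comp: "clip \<in> borel_measurable (compd lam c y k)"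
  by (subst measurable_cong_sets[OF sets_comp[OF lam0] refl]) simp

lemma clip2_meas_comp: "(\<lambda>t. clip t * clip t) \<in> borel_measurable (compd lam c y k)"
  by (subst measurable_cong_sets[OF sets_comp[OF lam0] refl]) simp

lemma int_clip_comp: "integrable (compd lam c y k) clip"
proof -
  interpret finite_measure "compd lam c y k" using prob_comp[OF lam0] by (rule prob_space.finite_measure)
  show ?thesis by (rule integrable_const_bound[where B=1]) (auto simp: abs_clip clip_meas_comp)
qed

lemma int_clip2_comp: "integrable (compd lam c y k) (\<lambda>t. clip t * clip t)"
proof -
  interpret finite_measure "compd lam c y k" using prob_comp[OF lam0] by (rule prob_space.finite_measure)
  have "\<bar>clip t * clip t\<bar> \<le> 1" for t
  proof -
    have "\<bar>clip t\<bar> * \<bar>clip t\<bar> \<le> 1" using abs_clip[of t] by (intro mult_le_one) auto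
    then show ?thesis by (simp add: abs_mult)
  qed
  then show ?thesis by (intro integrable_const_bound[where B=1]) (auto simp: clip2_meas_comp)
qed

lemma unif_AE_clip:
  assumes "a \<le> b" "-1 \<le> a" "b \<le> 1" "a < b"
  shows "AE t in uniform_measure lborel {a..b}. clip t = t"
  using assms by (subst AE_uniform_measure) (auto intro!: AE_I2 clip_id)

lemma comp_int1: assumes y: "y \<in> {-1, 1}"
  shows "integral\<^sup>L (compd lam c y k) clip = y * (if k = c then 1 else lam / 2)"
proof (cases "k = c")
  case True
  have e: "compd lam c y k = return borel y" using True by (simp add: compd_def)
  show ?thesis unfolding e using True y by (subst integral_return) (auto simp: clip_def)
next
  case False
  have id1: "(\<lambda>t::real. t) = (\<lambda>t. t ^ 1)" by simp
  show ?thesis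
  proof (cases "y = 1")
    case True
    have e: "compd lam c y k = uniform_measure lborel {0..lam}" using True False by (simp add: compd_def)
    have "integral\<^sup>L (uniform_measure lborel {0..lam}) clip = integral\<^sup>L (uniform_measure lborel {0..lam}) (\<lambda>t. t ^ 1)"
      using lam0 lam1 by (intro integral_cong_AE) (auto intro: unif_AE_clip)
    also have "\<dots> = lam / 2" using lam0 by (subst integral_unif_pow) (auto simp: power2_eq_square)
    finally show ?thesis unfolding e using True False by simp
  next
    case False2: False
    then have y1: "y = -1" using y by auto
    have e: "compd lam c y k = uniform_measure lborel {-lam..0}" using False False2 by (simp add: compd_def)
    have "integral\<^sup>L (uniform_measure lborel {-lam..0}) clip = integral\<^sup>L (uniform_measure lborel {-lam..0}) (\<lambda>t. t ^ 1)"
      using lam0 lam1 by (intro integral_cong_AE) (auto intro: unif_AE_clip)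
    also have "\<dots> = - lam / 2" using lam0 by (subst integral_unif_pow) (auto simp: power2_eq_square)
    finally show ?thesis unfolding e using y1 False by simp
  qed
qed

lemma comp_int2: assumes y: "y \<in> {-1, 1}"
  shows "integral\<^sup>L (compd lam c y k) (\<lambda>t. clip t * clip t) = (if k = c then 1 else lam^2 / 3)"
proof (cases "k = c")
  case True
  have e: "compd lam c y k = return borel y" using True by (simp add: compd_def)
  show ?thesis unfolding e using True y by (subst integral_return) (auto simp: clip_def)
next
  case False
  show ?thesis
  proof (cases "y = 1")
    case True
    have e: "compd lam c y k = uniform_measure lborel {0..lam}" using True False by (simp add: compd_def)
    have "integral\<^sup>L (uniform_measure lborel {0..lam}) (\<lambda>t. clip t * clip t) = integral\<^sup>L (uniform_measure lborel {0..lam}) (\<lambda>t. t ^ 2)"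
      using lam0 lam1 by (intro integral_cong_AE) (auto intro!: eventually_mono[OF unif_AE_clip] simp: power2_eq_square)
    also have "\<dots> = lam^2 / 3" using lam0 by (subst integral_unif_pow) (auto simp: power2_eq_square power3_eq_cube)
    finally show ?thesis unfolding e using True False by simp
  next
    case False2: False
    have e: "compd lam c y k = uniform_measure lborel {-lam..0}" using False False2 by (simp add: compd_def)
    have "integral\<^sup>L (uniform_measure lborel {-lam..0}) (\<lambda>t. clip t * clip t) = integral\<^sup>L (uniform_measure lborel {-lam..0}) (\<lambda>t. t ^ 2)"
      using lam0 lam1 by (intro integral_cong_AE) (auto intro!: eventually_mono[OF unif_AE_clip] simp: power2_eq_square)
    also have "\<dots> = lam^2 / 3" using lam0 by (subst integral_unif_pow) (auto simp: power2_eq_square power3_eq_cube)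
    finally show ?thesis unfolding e using False by simp
  qed
qed

end


definition Wl :: "nat \<Rightarrow> nat \<Rightarrow> (nat \<Rightarrow> nat \<Rightarrow> real) \<Rightarrow> (nat \<Rightarrow> nat \<Rightarrow> real) \<Rightarrow> (nat \<Rightarrow> (nat \<Rightarrow> real) \<times> real) \<Rightarrow> nat \<Rightarrow> real" where
  "Wl d N P Q S l = (1 / real N) * (\<Sum>n\<in>{1..N}. (\<Sum>i\<in>{1..d+1}. P (d+1) i * zz d (S n) i) * (\<Sum>m\<in>{1..d+1}. Q m l * zz d (S n) m))"

lemma tf_formula:
  "tf d N P Q (Zmat d N S \<Delta>) (d+1) (N+1) = (\<Sum>l\<in>{1..d}. Wl d N P Q S l * (fst (S (N+1)) l + \<Delta> l))"
proof -
  define Z where "Z = Zmat d N S \<Delta>"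
  define A1 where "A1 = mmul (d+1) P Z"
  define A2 where "A2 = mmul (N+1) A1 (Mmask N)"
  define A3 where "A3 = mmul (N+1) A2 (transp_mat Z)"
  define A4 where "A4 = mmul (d+1) A3 Q"
  have t: "tf d N P Q Z (d+1) (N+1) = (1 / real N) * (\<Sum>l\<in>{1..d+1}. A4 (d+1) l * Z l (N+1))"
    unfolding tf_def A4_def A3_def A2_def A1_def by (simp add: mmul_def)
  have zn: "Z k n = zz d (S n) k" if "n \<le> N" for k n using that by (simp add: Z_def Zmat_def zz_def)
  have A2e: "A2 r n = (if n \<le> N then A1 r n else 0)" if n: "n \<in> {1..N+1}" for r n
  proof -
    have "A2 r n = (\<Sum>n'\<in>{1..N+1}. if n' = n then (if n \<le> N then A1 r n else 0) else 0)"
      unfolding A2_def mmul_def by (intro sum.cong refl) (auto simp: Mmask_def)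
    also have "\<dots> = (if n \<le> N then A1 r n else 0)" using n by (simp add: sum.delta)
    finally show ?thesis .
  qed
  have A3e: "A3 r m = (\<Sum>n\<in>{1..N}. A1 r n * zz d (S n) m)" for r m
  proof -
    have e: "{1..N+1} = insert (N+1) {1..N}" by auto
    have "A3 r m = (\<Sum>n\<in>{1..N+1}. A2 r n * Z m n)" unfolding A3_def mmul_def transp_mat_def ..
    also have "\<dots> = (\<Sum>n\<in>{1..N}. A2 r n * Z m n)"
      unfolding e using A2e[of "N+1" r] by simp
    also have "\<dots> = (\<Sum>n\<in>{1..N}. A1 r n * zz d (S n) m)"
      by (intro sum.cong refl) (auto simp: A2e zn)
    finally show ?thesis .
  qed
  have A1e: "A1 r n = (\<Sum>i\<in>{1..d+1}. P r i * zz d (S n) i)" if "n \<le> N" for r n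
    unfolding A1_def mmul_def using that by (simp add: zn)
  have "tf d N P Q Z (d+1) (N+1) = (1 / real N) * (\<Sum>l\<in>{1..d}. A4 (d+1) l * (fst (S (N+1)) l + \<Delta> l))"
  proof -
    have e: "{1..d+1} = insert (d+1) {1..d}" by auto
    have "(\<Sum>l\<in>{1..d+1}. A4 (d+1) l * Z l (N+1)) = (\<Sum>l\<in>{1..d}. A4 (d+1) l * Z l (N+1))"
      unfolding e by (simp add: Z_def Zmat_def)
    also have "\<dots> = (\<Sum>l\<in>{1..d}. A4 (d+1) l * (fst (S (N+1)) l + \<Delta> l))"
      by (intro sum.cong refl) (auto simp: Z_def Zmat_def)
    finally show ?thesis unfolding t by simp
  qed
  also have "\<dots> = (\<Sum>l\<in>{1..d}. Wl d N P Q S l * (fst (S (N+1)) l + \<Delta> l))"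
    unfolding sum_distrib_left
  proof (intro sum.cong refl)
    fix l assume l: "l \<in> {1..d}"
    have "A4 (d+1) l = (\<Sum>m\<in>{1..d+1}. (\<Sum>n\<in>{1..N}. A1 (d+1) n * zz d (S n) m) * Q m l)"
      unfolding A4_def mmul_def A3e ..
    also have "\<dots> = (\<Sum>m\<in>{1..d+1}. \<Sum>n\<in>{1..N}. A1 (d+1) n * (Q m l * zz d (S n) m))"
      by (intro sum.cong refl) (simp add: sum_distrib_right sum_distrib_left mult_ac)
    also have "\<dots> = (\<Sum>n\<in>{1..N}. \<Sum>m\<in>{1..d+1}. A1 (d+1) n * (Q m l * zz d (S n) m))"
      by (rule sum.swap)
    also have "\<dots> = (\<Sum>n\<in>{1..N}. A1 (d+1) n * (\<Sum>m\<in>{1..d+1}. Q m l * zz d (S n) m))"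
      by (simp only: sum_distrib_left)
    also have "\<dots> = (\<Sum>n\<in>{1..N}. (\<Sum>i\<in>{1..d+1}. P (d+1) i * zz d (S n) i) * (\<Sum>m\<in>{1..d+1}. Q m l * zz d (S n) m))"
      by (intro sum.cong refl) (simp add: A1e)
    finally show "1 / real N * (A4 (d + 1) l * (fst (S (N + 1)) l + \<Delta> l)) = Wl d N P Q S l * (fst (S (N + 1)) l + \<Delta> l)"
      unfolding Wl_def by simp
  qed
  finally show ?thesis unfolding Z_def .
qed


lemma mul_sgn: "(a::real) * sgn a = \<bar>a\<bar>"
  by (cases rule: linorder_cases[of a 0]) auto

lemma sup_lin:
  fixes a :: "nat \<Rightarrow> real" and C eps :: real
  assumes eps: "0 \<le> eps"
  shows "(SUP \<Delta>\<in>{\<Delta>. \<forall>i\<in>{1..d}. \<bar>\<Delta> i\<bar> \<le> eps}. C + (\<Sum>l\<in>{1..d}. a l * \<Delta> l)) = C + eps * (\<Sum>l\<in>{1..d}. \<bar>a l\<bar>)"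
proof (rule cSup_eq_maximum)
  define D0 where "D0 = (\<lambda>l. eps * sgn (a l))"
  have "D0 \<in> {\<Delta>. \<forall>i\<in>{1..d}. \<bar>\<Delta> i\<bar> \<le> eps}" using eps by (auto simp: D0_def abs_mult abs_sgn_eq)
  moreover have "C + (\<Sum>l\<in>{1..d}. a l * D0 l) = C + eps * (\<Sum>l\<in>{1..d}. \<bar>a l\<bar>)"
    by (simp add: D0_def sum_distrib_left mult.left_commute mul_sgn)
  ultimately show "C + eps * (\<Sum>l\<in>{1..d}. \<bar>a l\<bar>) \<in> (\<lambda>\<Delta>. C + (\<Sum>l\<in>{1..d}. a l * \<Delta> l)) ` {\<Delta>. \<forall>i\<in>{1..d}. \<bar>\<Delta> i\<bar> \<le> eps}"
    by (metis (no_types, lifting) image_eqI)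
next
  fix z assume "z \<in> (\<lambda>\<Delta>. C + (\<Sum>l\<in>{1..d}. a l * \<Delta> l)) ` {\<Delta>. \<forall>i\<in>{1..d}. \<bar>\<Delta> i\<bar> \<le> eps}"
  then obtain \<Delta> where D: "\<forall>i\<in>{1..d}. \<bar>\<Delta> i\<bar> \<le> eps" and z: "z = C + (\<Sum>l\<in>{1..d}. a l * \<Delta> l)" by auto
  have "(\<Sum>l\<in>{1..d}. a l * \<Delta> l) \<le> (\<Sum>l\<in>{1..d}. eps * \<bar>a l\<bar>)"
  proof (intro sum_mono)
    fix l assume l: "l \<in> {1..d}"
    have "a l * \<Delta> l \<le> \<bar>a l\<bar> * \<bar>\<Delta> l\<bar>" by (metis abs_ge_self abs_mult)
    also have "\<dots> \<le> \<bar>a l\<bar> * eps" using D l by (intro mult_left_mono) auto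
    finally show "a l * \<Delta> l \<le> eps * \<bar>a l\<bar>" by (simp add: mult.commute)
  qed
  then show "z \<le> C + eps * (\<Sum>l\<in>{1..d}. \<bar>a l\<bar>)" unfolding z by (simp add: sum_distrib_left)
qed

definition advc :: "nat \<Rightarrow> nat \<Rightarrow> real \<Rightarrow> (nat \<Rightarrow> nat \<Rightarrow> real) \<Rightarrow> (nat \<Rightarrow> nat \<Rightarrow> real) \<Rightarrow> (nat \<Rightarrow> (nat \<Rightarrow> real) \<times> real) \<Rightarrow> real" where
  "advc d N eps P Q S = - snd (S (N+1)) * (\<Sum>l\<in>{1..d}. Wl d N P Q S l * fst (S (N+1)) l)
      + eps * (\<Sum>l\<in>{1..d}. \<bar>- snd (S (N+1)) * Wl d N P Q S l\<bar>)"

lemma adv_closed: assumes "0 \<le> eps" shows "adv_loss d N eps P Q S = advc d N eps P Q S"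
proof -
  have "adv_loss d N eps P Q S = (SUP \<Delta>\<in>{\<Delta>. \<forall>i\<in>{1..d}. \<bar>\<Delta> i\<bar> \<le> eps}.
      - snd (S (N+1)) * (\<Sum>l\<in>{1..d}. Wl d N P Q S l * fst (S (N+1)) l) + (\<Sum>l\<in>{1..d}. (- snd (S (N+1)) * Wl d N P Q S l) * \<Delta> l))"
    unfolding adv_loss_def tf_formula
    by (intro SUP_cong refl) (simp add: distrib_left sum.distrib sum_distrib_left mult_ac)
  also have "\<dots> = advc d N eps P Q S" unfolding advc_def by (rule sup_lin[OF assms])
  finally show ?thesis .
qed


lemma zc_meas: assumes i: "i \<in> {1..d+1}" shows "(\<lambda>w. zc d w i) \<in> borel_measurable (Km d)"
proof (cases "i \<le> d")
  case True
  then have i': "i \<in> {1..d}" using i by auto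
  have "(\<lambda>w. zc d w i) = (\<lambda>w. clip (fst w i))" using True by (simp add: zc_def zz_def)
  also have "\<dots> \<in> borel_measurable (Km d)" unfolding Km_def
    by (intro measurable_compose[OF measurable_compose[OF measurable_fst measurable_component_singleton[OF i']] measurable_clip])
  finally show ?thesis .
next
  case False
  have "(\<lambda>w. zc d w i) = (\<lambda>w. clip (snd w))" using False by (simp add: zc_def zz_def)
  also have "\<dots> \<in> borel_measurable (Km d)" unfolding Km_def
    by (intro measurable_compose[OF measurable_snd measurable_clip])
  finally show ?thesis .
qed

lemma abs_zc: "\<bar>zc d w i\<bar> \<le> 1" unfolding zc_def by (rule abs_clip)

lemma abs_zc2: "\<bar>zc d w i * zc d w m\<bar> \<le> 1"
proof -
  have "\<bar>zc d w i\<bar> * \<bar>zc d w m\<bar> \<le> 1" using abs_zc[of d w i] abs_zc[of d w m] by (intro mult_le_one) auto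
  then show ?thesis by (simp add: abs_mult)
qed

context
  fixes lam :: real
  assumes lam0: "0 < lam" and lam1: "lam < 1"
begin

lemma moment_Piy:
  assumes c: "c \<in> {1..d}" and y: "y \<in> {-1, 1}" and i: "i \<in> {1..d+1}" and m: "m \<in> {1..d+1}"
  shows "integral\<^sup>L (Piy d lam c y) (\<lambda>x. zc d (x, y) i * zc d (x, y) m) = muv d lam c i m"
proof -
  have Pk: "\<And>k. prob_space (compd lam c y k)" by (rule prob_comp[OF lam0])
  interpret P: prob_space "Piy d lam c y" by (rule prob_Piy[OF lam0])
  have cy: "clip y = y" using y by (auto simp: clip_def)
  have yy: "y * y = 1" using y by auto
  have I1: "integral\<^sup>L (Piy d lam c y) (\<lambda>x. clip (x k)) = y * av d lam c k" if k: "k \<in> {1..d}" for k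
    unfolding Piy_def using k c
    by (subst PiM_int1[OF _ k Pk int_clip_comp[OF lam0 lam1]]) (auto simp: comp_int1[OF lam0 lam1 y] av_def)
  consider "i = d+1" "m = d+1" | "i = d+1" "m \<le> d" | "i \<le> d" "m = d+1" | "i \<le> d" "m \<le> d" "i = m" | "i \<le> d" "m \<le> d" "i \<noteq> m"
    using i m by force
  then show ?thesis
  proof cases
    case 1
    then show ?thesis by (simp add: zc_def zz_def cy yy muv_def qv_def P.prob_space)
  next
    case 2
    then have m': "m \<in> {1..d}" using m by auto
    have "integral\<^sup>L (Piy d lam c y) (\<lambda>x. zc d (x, y) i * zc d (x, y) m) = integral\<^sup>L (Piy d lam c y) (\<lambda>x. y * clip (x m))"
      using 2 by (simp add: zc_def zz_def cy)
    also have "\<dots> = y * (y * av d lam c m)" by (simp add: I1[OF m'])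
    finally show ?thesis using 2 by (simp add: muv_def av_def yy mult.assoc[symmetric])
  next
    case 3
    then have i': "i \<in> {1..d}" using i by auto
    have "integral\<^sup>L (Piy d lam c y) (\<lambda>x. zc d (x, y) i * zc d (x, y) m) = integral\<^sup>L (Piy d lam c y) (\<lambda>x. clip (x i) * y)"
      using 3 i by (simp add: zc_def zz_def cy)
    also have "\<dots> = (y * av d lam c i) * y" by (simp add: I1[OF i'])
    finally show ?thesis using 3 i by (simp add: muv_def av_def yy mult.commute mult.left_commute)
  next
    case 4
    then have i': "i \<in> {1..d}" using i by auto
    have "integral\<^sup>L (Piy d lam c y) (\<lambda>x. zc d (x, y) i * zc d (x, y) m) = integral\<^sup>L (Piy d lam c y) (\<lambda>x. clip (x i) * clip (x i))"
      using 4 by (simp add: zc_def zz_def)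
    also have "\<dots> = integral\<^sup>L (compd lam c y i) (\<lambda>t. clip t * clip t)"
      unfolding Piy_def using i' by (subst PiM_int1[OF _ i' Pk int_clip2_comp[OF lam0 lam1]]) auto
    also have "\<dots> = muv d lam c i m" using 4 c by (simp add: comp_int2[OF lam0 lam1 y] muv_def qv_def)
    finally show ?thesis .
  next
    case 5
    then have i': "i \<in> {1..d}" and m': "m \<in> {1..d}" using i m by auto
    have "integral\<^sup>L (Piy d lam c y) (\<lambda>x. zc d (x, y) i * zc d (x, y) m) = integral\<^sup>L (Piy d lam c y) (\<lambda>x. clip (x i) * clip (x m))"
      using 5 by (simp add: zc_def zz_def)
    also have "\<dots> = integral\<^sup>L (compd lam c y i) clip * integral\<^sup>L (compd lam c y m) clip"
      unfolding Piy_def using i' m' 5 by (subst PiM_int2[OF _ i' m' _ Pk int_clip_comp[OF lam0 lam1] int_clip_comp[OF lam0 lam1]]) auto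
    also have "\<dots> = (y * av d lam c i) * (y * av d lam c m)"
      using i' m' c by (simp add: comp_int1[OF lam0 lam1 y] av_def)
    also have "\<dots> = muv d lam c i m" using 5 by (simp add: muv_def algebra_simps yy)
    finally show ?thesis .
  qed
qed

lemma moment_D:
  assumes c: "c \<in> {1..d}" and i: "i \<in> {1..d+1}" and m: "m \<in> {1..d+1}"
  shows "integral\<^sup>L (Dtr d lam c) (\<lambda>w. zc d w i * zc d w m) = muv d lam c i m"
proof -
  have h: "(\<lambda>w. zc d w i * zc d w m) \<in> borel_measurable (Km d)"
    using zc_meas[OF i] zc_meas[OF m] by (rule borel_measurable_times)
  show ?thesis
    by (subst integral_D[OF lam0 lam1 h abs_zc2])
       (simp add: moment_Piy[OF c _ i m])
qed

end


definition Om :: "nat \<Rightarrow> nat \<Rightarrow> real \<Rightarrow> nat \<Rightarrow> (nat \<Rightarrow> (nat \<Rightarrow> real) \<times> real) measure" where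
  "Om d N lam c = PiM {1..N+1} (\<lambda>_. Dtr d lam c)"

definition Wlc :: "nat \<Rightarrow> nat \<Rightarrow> (nat \<Rightarrow> nat \<Rightarrow> real) \<Rightarrow> (nat \<Rightarrow> nat \<Rightarrow> real) \<Rightarrow> (nat \<Rightarrow> (nat \<Rightarrow> real) \<times> real) \<Rightarrow> nat \<Rightarrow> real" where
  "Wlc d N P Q S l = (1 / real N) * (\<Sum>n\<in>{1..N}. (\<Sum>i\<in>{1..d+1}. P (d+1) i * zc d (S n) i) * (\<Sum>m\<in>{1..d+1}. Q m l * zc d (S n) m))"

definition phi :: "nat \<Rightarrow> real \<Rightarrow> (nat \<Rightarrow> real) \<times> real \<Rightarrow> nat \<Rightarrow> real" where
  "phi d eps w l = eps - zc d w (d+1) * zc d w l"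

definition Gc :: "nat \<Rightarrow> nat \<Rightarrow> real \<Rightarrow> (nat \<Rightarrow> nat \<Rightarrow> real) \<Rightarrow> (nat \<Rightarrow> nat \<Rightarrow> real) \<Rightarrow> (nat \<Rightarrow> (nat \<Rightarrow> real) \<times> real) \<Rightarrow> real" where
  "Gc d N eps P Q S = (\<Sum>l\<in>{1..d}. phi d eps (S (N+1)) l * Wlc d N P Q S l)"

lemma zz_meas: assumes i: "i \<in> {1..d+1}" shows "(\<lambda>w. zz d w i) \<in> borel_measurable (Km d)"
proof (cases "i \<le> d")
  case True
  then have i': "i \<in> {1..d}" using i by auto
  have "(\<lambda>w. zz d w i) = (\<lambda>w. fst w i)" using True by (simp add: zz_def)
  also have "\<dots> \<in> borel_measurable (Km d)" unfolding Km_def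
    by (intro measurable_compose[OF measurable_fst measurable_component_singleton[OF i']])
  finally show ?thesis .
next
  case False
  have "(\<lambda>w. zz d w i) = (\<lambda>w. snd w)" using False by (simp add: zz_def)
  also have "\<dots> \<in> borel_measurable (Km d)" unfolding Km_def by simp
  finally show ?thesis .
qed

lemma good_zz: assumes "good d w" "i \<in> {1..d+1}" shows "zz d w i = zc d w i" "0 \<le> snd w * zz d w i"
proof -
  have "\<bar>zz d w i\<bar> \<le> 1 \<and> 0 \<le> snd w * zz d w i"
    using assms unfolding good_def zz_def by (cases "i \<le> d") auto
  then show "zz d w i = zc d w i" "0 \<le> snd w * zz d w i" unfolding zc_def by (auto simp: clip_id)
qed

context
  fixes lam :: real and d N c :: nat
  assumes lam0: "0 < lam" and lam1: "lam < 1"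
begin

lemma prob_Om: "prob_space (Om d N lam c)"
  unfolding Om_def by (intro prob_space_PiM prob_D[OF lam0])

lemma comp_meas: assumes f: "f \<in> borel_measurable (Km d)" and n: "n \<in> {1..N+1}"
  shows "(\<lambda>S. f (S n)) \<in> borel_measurable (Om d N lam c)"
proof -
  have "f \<in> borel_measurable (Dtr d lam c)"
    using f by (subst measurable_cong_sets[OF sets_D[OF lam0] refl])
  then show ?thesis unfolding Om_def
    by (intro measurable_compose[OF measurable_component_singleton[OF n]])
qed

lemma zz_meas_Om: "n \<in> {1..N+1} \<Longrightarrow> i \<in> {1..d+1} \<Longrightarrow> (\<lambda>S. zz d (S n) i) \<in> borel_measurable (Om d N lam c)"
  by (rule comp_meas[OF zz_meas])

lemma zc_meas_Om: "n \<in> {1..N+1} \<Longrightarrow> i \<in> {1..d+1} \<Longrightarrow> (\<lambda>S. zc d (S n) i) \<in> borel_measurable (Om d N lam c)"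
  by (rule comp_meas[OF zc_meas])

lemma Wl_meas: "(\<lambda>S. Wl d N P Q S l) \<in> borel_measurable (Om d N lam c)"
  unfolding Wl_def
  by (intro borel_measurable_times borel_measurable_const borel_measurable_sum zz_meas_Om) auto

lemma Wlc_meas: "(\<lambda>S. Wlc d N P Q S l) \<in> borel_measurable (Om d N lam c)"
  unfolding Wlc_def
  by (intro borel_measurable_times borel_measurable_const borel_measurable_sum zc_meas_Om) auto

lemma advc_meas: "advc d N eps P Q \<in> borel_measurable (Om d N lam c)"
proof -
  have y: "(\<lambda>S. snd (S (N+1))) = (\<lambda>S. zz d (S (N+1)) (d+1))" by (simp add: zz_def)
  have x: "(\<lambda>S. Wl d N P Q S l * fst (S (N+1)) l) = (\<lambda>S. Wl d N P Q S l * zz d (S (N+1)) l)" if "l \<in> {1..d}" for l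
    using that by (simp add: zz_def)
  have "(\<lambda>S. snd (S (N+1))) \<in> borel_measurable (Om d N lam c)" unfolding y by (rule zz_meas_Om) auto
  moreover have fx: "(\<lambda>S. fst (S (N+1)) l) \<in> borel_measurable (Om d N lam c)" if "l \<in> {1..d}" for l
    using zz_meas_Om[of "N+1" l] that by (simp add: zz_def)
  moreover have "(\<lambda>S. \<Sum>l\<in>{1..d}. Wl d N P Q S l * fst (S (N+1)) l) \<in> borel_measurable (Om d N lam c)"
    by (intro borel_measurable_sum borel_measurable_times Wl_meas fx)
  ultimately show ?thesis unfolding advc_def
    by (intro borel_measurable_add borel_measurable_times borel_measurable_const borel_measurable_sum
        borel_measurable_abs borel_measurable_uminus Wl_meas) auto
qed

lemma Gc_meas: "Gc d N eps P Q \<in> borel_measurable (Om d N lam c)"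
  unfolding Gc_def phi_def
  by (intro borel_measurable_times borel_measurable_const borel_measurable_sum borel_measurable_diff
      Wlc_meas zc_meas_Om) auto

lemma AE_Om: "AE S in Om d N lam c. \<forall>n\<in>{1..N+1}. good d (S n)"
  unfolding Om_def
  by (intro AE_finite_allI AE_PiM_component[where P="good d"] prob_D[OF lam0] AE_D[OF lam0 lam1]) auto

end

lemma sq1: "y * y = (1::real) \<Longrightarrow> a * b = (y * a) * (y * b)"
proof -
  assume "y * y = 1"
  moreover have "(y * a) * (y * b) = (y * y) * (a * b)" by (simp add: algebra_simps)
  ultimately show ?thesis by simp
qed

lemma advc_Gc:
  assumes g: "\<forall>n\<in>{1..N+1}. good d (S n)" and P: "in01 d P" and Q: "in01 d Q"
  shows "advc d N eps P Q S = Gc d N eps P Q S"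
proof -
  have zzc: "zz d (S n) i = zc d (S n) i" if "n \<in> {1..N+1}" "i \<in> {1..d+1}" for n i
    using good_zz(1)[of d "S n" i] g that by auto
  have W: "Wl d N P Q S l = Wlc d N P Q S l" for l
    unfolding Wl_def Wlc_def by (intro arg_cong2[where f="(*)"] refl sum.cong arg_cong2[where f="(*)"]) (auto simp: zzc)
  have Wpos: "0 \<le> Wl d N P Q S l" if l: "l \<in> {1..d}" for l
  proof -
    have h: "0 \<le> (\<Sum>i\<in>{1..d+1}. P (d+1) i * zz d (S n) i) * (\<Sum>m\<in>{1..d+1}. Q m l * zz d (S n) m)"
      if n: "n \<in> {1..N}" for n
    proof -
      define y where "y = snd (S n)"
      have gn: "good d (S n)" using g n by auto
      have yy: "y * y = 1" using gn unfolding good_def y_def by auto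
      have A: "0 \<le> y * (\<Sum>i\<in>{1..d+1}. P (d+1) i * zz d (S n) i)"
        unfolding sum_distrib_left
      proof (intro sum_nonneg)
        fix i assume i: "i \<in> {1..d+1}"
        have "0 \<le> P (d+1) i" using P i unfolding in01_def by auto
        moreover have "0 \<le> y * zz d (S n) i" using good_zz(2)[OF gn i] by (simp add: y_def)
        ultimately show "0 \<le> y * (P (d+1) i * zz d (S n) i)"
          by (metis mult.left_commute mult_nonneg_nonneg)
      qed
      have B: "0 \<le> y * (\<Sum>m\<in>{1..d+1}. Q m l * zz d (S n) m)"
        unfolding sum_distrib_left
      proof (intro sum_nonneg)
        fix i assume i: "i \<in> {1..d+1}"
        have "0 \<le> Q i l" using Q i l unfolding in01_def by auto
        moreover have "0 \<le> y * zz d (S n) i" using good_zz(2)[OF gn i] by (simp add: y_def)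
        ultimately show "0 \<le> y * (Q i l * zz d (S n) i)"
          by (metis mult.left_commute mult_nonneg_nonneg)
      qed
      have "(\<Sum>i\<in>{1..d+1}. P (d+1) i * zz d (S n) i) * (\<Sum>m\<in>{1..d+1}. Q m l * zz d (S n) m)
          = (y * (\<Sum>i\<in>{1..d+1}. P (d+1) i * zz d (S n) i)) * (y * (\<Sum>m\<in>{1..d+1}. Q m l * zz d (S n) m))"
        by (rule sq1[OF yy])
      then show ?thesis using mult_nonneg_nonneg[OF A B] by metis
    qed
    have "0 \<le> (\<Sum>n\<in>{1..N}. (\<Sum>i\<in>{1..d+1}. P (d+1) i * zz d (S n) i) * (\<Sum>m\<in>{1..d+1}. Q m l * zz d (S n) m))"
      by (rule sum_nonneg) (erule h)
    then show ?thesis unfolding Wl_def by (rule mult_nonneg_nonneg[rotated]) simp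
  qed
  define y where "y = snd (S (N+1))"
  have gq: "good d (S (N+1))" using g by auto
  have y1: "\<bar>y\<bar> = 1" using gq unfolding good_def y_def by auto
  have zy: "zc d (S (N+1)) (d+1) = y" using good_zz(1)[OF gq, of "d+1"] by (simp add: zz_def y_def)
  have zx: "zc d (S (N+1)) l = fst (S (N+1)) l" if "l \<in> {1..d}" for l
    using good_zz(1)[OF gq, of l] that by (simp add: zz_def)
  have "advc d N eps P Q S = (\<Sum>l\<in>{1..d}. - y * (Wl d N P Q S l * fst (S (N+1)) l) + eps * Wl d N P Q S l)"
    unfolding advc_def y_def[symmetric] sum_distrib_left sum.distrib[symmetric]
    by (intro sum.cong refl) (simp add: abs_mult y1 Wpos)
  also have "\<dots> = Gc d N eps P Q S"
    unfolding Gc_def phi_def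
    by (intro sum.cong refl) (simp add: zy zy[simplified] zx zx[simplified] W algebra_simps)
  finally show ?thesis .
qed


lemma Gc_expand:
  "Gc d N eps P Q S = (\<Sum>l\<in>{1..d}. \<Sum>n\<in>{1..N}. \<Sum>i\<in>{1..d+1}. \<Sum>m\<in>{1..d+1}.
      ((1 / real N) * (P (d+1) i * Q m l)) * (phi d eps (S (N+1)) l * (zc d (S n) i * zc d (S n) m)))"
  unfolding Gc_def Wlc_def sum_product
  by (simp only: sum_distrib_left) (intro sum.cong refl; simp only: mult_ac)

lemma phi_meas: "(\<lambda>w. phi d eps w l) \<in> borel_measurable (Km d)" if "l \<in> {1..d}"
  unfolding phi_def using that
  by (intro borel_measurable_diff borel_measurable_const borel_measurable_times zc_meas) auto

lemma abs_phi: "\<bar>phi d eps w l\<bar> \<le> \<bar>eps\<bar> + 1"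
proof -
  have "\<bar>zc d w (d+1) * zc d w l\<bar> \<le> 1" by (rule abs_zc2)
  then show ?thesis unfolding phi_def by linarith
qed

lemma integral_sum4:
  fixes f :: "'l \<Rightarrow> 'n \<Rightarrow> 'i \<Rightarrow> 'm \<Rightarrow> 'a \<Rightarrow> real"
  assumes "\<And>l n i m. l \<in> A \<Longrightarrow> n \<in> B \<Longrightarrow> i \<in> C \<Longrightarrow> m \<in> E \<Longrightarrow> integrable M (f l n i m)"
  shows "integral\<^sup>L M (\<lambda>x. \<Sum>l\<in>A. \<Sum>n\<in>B. \<Sum>i\<in>C. \<Sum>m\<in>E. f l n i m x) = (\<Sum>l\<in>A. \<Sum>n\<in>B. \<Sum>i\<in>C. \<Sum>m\<in>E. integral\<^sup>L M (f l n i m))"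
  by (simp add: Bochner_Integration.integral_sum Bochner_Integration.integrable_sum assms)

context
  fixes lam :: real and d N c :: nat
  assumes lam0: "0 < lam" and lam1: "lam < 1" and c: "c \<in> {1..d}" and N1: "N \<ge> 1"
begin

lemma meas_D: "f \<in> borel_measurable (Km d) \<Longrightarrow> f \<in> borel_measurable (Dtr d lam c)"
  by (subst measurable_cong_sets[OF sets_D[OF lam0] refl])

lemma int_D: assumes f: "f \<in> borel_measurable (Km d)" and B: "\<And>w. \<bar>f w\<bar> \<le> B"
  shows "integrable (Dtr d lam c) (f :: _ \<Rightarrow> real)"
proof -
  interpret finite_measure "Dtr d lam c" using prob_D[OF lam0] by (rule prob_space.finite_measure)
  show ?thesis by (rule integrable_const_bound[where B=B]) (auto simp: B meas_D[OF f])
qed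

lemma int_phi_D: "l \<in> {1..d} \<Longrightarrow> integral\<^sup>L (Dtr d lam c) (\<lambda>w. phi d eps w l) = - gv d lam eps c l"
proof -
  assume l: "l \<in> {1..d}"
  have i1: "integrable (Dtr d lam c) (\<lambda>w. zc d w (d+1) * zc d w l)"
    using l by (intro int_D[where B=1] borel_measurable_times zc_meas abs_zc2) auto
  interpret prob_space "Dtr d lam c" by (rule prob_D[OF lam0])
  have "integral\<^sup>L (Dtr d lam c) (\<lambda>w. phi d eps w l) = eps - integral\<^sup>L (Dtr d lam c) (\<lambda>w. zc d w (d+1) * zc d w l)"
    unfolding phi_def by (subst Bochner_Integration.integral_diff) (auto simp: i1 i1[simplified] prob_space)
  also have "\<dots> = eps - muv d lam c (d+1) l" using l by (subst moment_D[OF lam0 lam1 c]) auto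
  also have "\<dots> = - gv d lam eps c l" using l by (simp add: muv_def av_def qv_def gv_def)
  finally show ?thesis .
qed

lemma base_int:
  assumes n: "n \<in> {1..N}" and l: "l \<in> {1..d}" and i: "i \<in> {1..d+1}" and m: "m \<in> {1..d+1}"
  shows "integrable (Om d N lam c) (\<lambda>S. phi d eps (S (N+1)) l * (zc d (S n) i * zc d (S n) m))"
    and "integral\<^sup>L (Om d N lam c) (\<lambda>S. phi d eps (S (N+1)) l * (zc d (S n) i * zc d (S n) m))
          = - gv d lam eps c l * muv d lam c i m"
proof -
  have mf: "(\<lambda>w. zc d w i * zc d w m) \<in> borel_measurable (Km d)"
    using i m by (intro borel_measurable_times zc_meas)
  have meas: "(\<lambda>S. phi d eps (S (N+1)) l * (zc d (S n) i * zc d (S n) m)) \<in> borel_measurable (Om d N lam c)"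
    using n lam1 by (intro borel_measurable_times[OF comp_meas[OF lam0 lam1 phi_meas[OF l]] comp_meas[OF lam0 lam1 mf]]) auto
  interpret finite_measure "Om d N lam c" using prob_Om[OF lam0 lam1] by (rule prob_space.finite_measure)
  have b: "\<bar>phi d eps (S (N+1)) l * (zc d (S n) i * zc d (S n) m)\<bar> \<le> \<bar>eps\<bar> + 1" for S
  proof -
    have "\<bar>phi d eps (S (N+1)) l\<bar> * \<bar>zc d (S n) i * zc d (S n) m\<bar> \<le> (\<bar>eps\<bar> + 1) * 1"
      by (intro mult_mono abs_phi abs_zc2) auto
    then show ?thesis by (simp add: abs_mult)
  qed
  show "integrable (Om d N lam c) (\<lambda>S. phi d eps (S (N+1)) l * (zc d (S n) i * zc d (S n) m))"
    by (rule integrable_const_bound[where B="\<bar>eps\<bar> + 1"]) (rule AE_I2, simp only: real_norm_def, rule b, rule meas)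
  have "integral\<^sup>L (Om d N lam c) (\<lambda>S. phi d eps (S (N+1)) l * (zc d (S n) i * zc d (S n) m))
      = integral\<^sup>L (Dtr d lam c) (\<lambda>w. phi d eps w l) * integral\<^sup>L (Dtr d lam c) (\<lambda>w. zc d w i * zc d w m)"
    unfolding Om_def using n
    by (intro PiM_int2[where f="\<lambda>w. phi d eps w l" and g="\<lambda>w. zc d w i * zc d w m"] prob_D[OF lam0]
        int_D[OF phi_meas[OF l] abs_phi] int_D[OF mf abs_zc2]) auto
  also have "\<dots> = - gv d lam eps c l * muv d lam c i m"
    by (simp add: int_phi_D[OF l] moment_D[OF lam0 lam1 c i m])
  finally show "integral\<^sup>L (Om d N lam c) (\<lambda>S. phi d eps (S (N+1)) l * (zc d (S n) i * zc d (S n) m))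
          = - gv d lam eps c l * muv d lam c i m" .
qed

lemma int_Gc:
  "integral\<^sup>L (Om d N lam c) (Gc d N eps P Q) =
     (\<Sum>l\<in>{1..d}. \<Sum>i\<in>{1..d+1}. \<Sum>m\<in>{1..d+1}. P (d+1) i * Q m l * (- gv d lam eps c l * muv d lam c i m))"
proof -
  have "integral\<^sup>L (Om d N lam c) (Gc d N eps P Q) = (\<Sum>l\<in>{1..d}. \<Sum>n\<in>{1..N}. \<Sum>i\<in>{1..d+1}. \<Sum>m\<in>{1..d+1}.
      ((1 / real N) * (P (d+1) i * Q m l)) * (- gv d lam eps c l * muv d lam c i m))"
  proof -
    have e: "Gc d N eps P Q = (\<lambda>S. \<Sum>l\<in>{1..d}. \<Sum>n\<in>{1..N}. \<Sum>i\<in>{1..d+1}. \<Sum>m\<in>{1..d+1}.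
      ((1 / real N) * (P (d+1) i * Q m l)) * (phi d eps (S (N+1)) l * (zc d (S n) i * zc d (S n) m)))"
      by (rule ext) (rule Gc_expand)
    show ?thesis unfolding e
      apply (subst integral_sum4)
       apply (rule Bochner_Integration.integrable_mult_right)
       apply (rule base_int(1); assumption)
      apply (intro sum.cong refl)
      apply (simp only: integral_mult_right_zero base_int(2))
      done
  qed
  also have "\<dots> = (\<Sum>l\<in>{1..d}. \<Sum>n\<in>{1..N}. (1 / real N) * (\<Sum>i\<in>{1..d+1}. \<Sum>m\<in>{1..d+1}. P (d+1) i * Q m l * (- gv d lam eps c l * muv d lam c i m)))"
    by (simp only: sum_distrib_left mult.assoc)
  also have "\<dots> = (\<Sum>l\<in>{1..d}. \<Sum>i\<in>{1..d+1}. \<Sum>m\<in>{1..d+1}. P (d+1) i * Q m l * (- gv d lam eps c l * muv d lam c i m))"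
  proof -
    have cN: "\<And>C. (\<Sum>n\<in>{1..N}. (1 / real N) * C) = C" using N1 by simp
    show ?thesis by (simp only: cN)
  qed
  finally show ?thesis .
qed

end


lemma swap4:
  fixes f :: "'c \<Rightarrow> 'l \<Rightarrow> 'i \<Rightarrow> 'm \<Rightarrow> real"
  shows "(\<Sum>c\<in>C. \<Sum>l\<in>L. \<Sum>i\<in>I. \<Sum>m\<in>M. f c l i m) = (\<Sum>l\<in>L. \<Sum>m\<in>M. \<Sum>i\<in>I. \<Sum>c\<in>C. f c l i m)"
proof -
  have "(\<Sum>c\<in>C. \<Sum>l\<in>L. \<Sum>i\<in>I. \<Sum>m\<in>M. f c l i m) = (\<Sum>l\<in>L. \<Sum>c\<in>C. \<Sum>i\<in>I. \<Sum>m\<in>M. f c l i m)"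
    by (rule sum.swap)
  also have "\<dots> = (\<Sum>l\<in>L. \<Sum>i\<in>I. \<Sum>c\<in>C. \<Sum>m\<in>M. f c l i m)"
    by (intro sum.cong refl sum.swap)
  also have "\<dots> = (\<Sum>l\<in>L. \<Sum>i\<in>I. \<Sum>m\<in>M. \<Sum>c\<in>C. f c l i m)"
    by (intro sum.cong refl sum.swap)
  also have "\<dots> = (\<Sum>l\<in>L. \<Sum>m\<in>M. \<Sum>i\<in>I. \<Sum>c\<in>C. f c l i m)"
    by (intro sum.cong refl sum.swap)
  finally show ?thesis .
qed

lemma inner_alg:
  fixes p :: "'i \<Rightarrow> real" and g :: "'c \<Rightarrow> real" and mu :: "'c \<Rightarrow> 'i \<Rightarrow> real"
  shows "(\<Sum>i\<in>I. \<Sum>c\<in>C. p i * q * (- g c * mu c i)) = - (q * (\<Sum>i\<in>I. p i * (\<Sum>c\<in>C. g c * mu c i)))"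
  by (simp add: sum_distrib_left sum_negf[symmetric] mult_ac)

lemma obj_eq:
  fixes d N :: nat and lam eps :: real and P Q :: "nat \<Rightarrow> nat \<Rightarrow> real"
  assumes d1: "d \<ge> 1" and N1: "N \<ge> 1" and lam0: "0 < lam" and lam1: "lam < 1" and eps0: "0 \<le> eps"
    and P: "in01 d P" and Q: "in01 d Q"
  shows "pretrain_obj d N lam eps P Q = Lval d lam eps P Q"
proof -
  have per_c: "integral\<^sup>L (PiM {1..N+1} (\<lambda>_. Dtr d lam c)) (adv_loss d N eps P Q) =
      (\<Sum>l\<in>{1..d}. \<Sum>i\<in>{1..d+1}. \<Sum>m\<in>{1..d+1}. P (d+1) i * Q m l * (- gv d lam eps c l * muv d lam c i m))"
    if c: "c \<in> {1..d}" for c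
  proof -
    have e1: "adv_loss d N eps P Q = advc d N eps P Q" by (rule ext) (rule adv_closed[OF eps0])
    have "integral\<^sup>L (Om d N lam c) (advc d N eps P Q) = integral\<^sup>L (Om d N lam c) (Gc d N eps P Q)"
      by (intro integral_cong_AE advc_meas[OF lam0 lam1] Gc_meas[OF lam0 lam1]
               eventually_mono[OF AE_Om[OF lam0 lam1]] advc_Gc P Q)
    also have "\<dots> = (\<Sum>l\<in>{1..d}. \<Sum>i\<in>{1..d+1}. \<Sum>m\<in>{1..d+1}. P (d+1) i * Q m l * (- gv d lam eps c l * muv d lam c i m))"
      by (rule int_Gc[OF lam0 lam1 c N1])
    finally show ?thesis unfolding e1 Om_def .
  qed
  have "pretrain_obj d N lam eps P Q = (\<Sum>c\<in>{1..d}. integral\<^sup>L (PiM {1..N+1} (\<lambda>_. Dtr d lam c)) (adv_loss d N eps P Q)) / real d"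
    unfolding pretrain_obj_def using d1 by (subst integral_pmf_of_set) auto
  also have "\<dots> = (\<Sum>c\<in>{1..d}. \<Sum>l\<in>{1..d}. \<Sum>i\<in>{1..d+1}. \<Sum>m\<in>{1..d+1}. P (d+1) i * Q m l * (- gv d lam eps c l * muv d lam c i m)) / real d"
    by (simp only: per_c cong: sum.cong)
  also have "\<dots> = (\<Sum>l\<in>{1..d}. \<Sum>m\<in>{1..d+1}. \<Sum>i\<in>{1..d+1}. \<Sum>c\<in>{1..d}. P (d+1) i * Q m l * (- gv d lam eps c l * muv d lam c i m)) / real d"
    by (subst swap4) (rule refl)
  also have "\<dots> = (\<Sum>l\<in>{1..d}. \<Sum>m\<in>{1..d+1}. - (Q m l * Kc d lam eps (P (d+1)) m l)) / real d"
    unfolding Kc_def kap_def by (simp only: inner_alg)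
  also have "\<dots> = Lval d lam eps P Q"
  proof -
    have g: "\<And>Y::real. (-Y)/real d = -(1/real d) * Y" by simp
    show ?thesis unfolding Lval_def sum_negf g ..
  qed
  finally show ?thesis .
qed

theorem lemmaD1:
  fixes d N d' b :: nat and lam eps :: real
  assumes "d \<ge> 1" and "N \<ge> 1"
    and "0 < lam" and "lam < 1" and "0 \<le> eps" and "eps < 1"
    and "d' \<le> d" and "b \<le> 1"
    and "\<forall>d''\<le>d. \<forall>b''\<le>1. score d lam eps d'' b'' \<le> score d lam eps d' b"
  shows "in01 d (Pmat d d' b) \<and> in01 d (Qmat d lam eps d' b) \<and>
    (\<forall>P' Q'. in01 d P' \<and> in01 d Q' \<longrightarrow>
       pretrain_obj d N lam eps (Pmat d d' b) (Qmat d lam eps d' b) \<le> pretrain_obj d N lam eps P' Q')"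
proof (intro conjI allI impI)
  show P: "in01 d (Pmat d d' b)" using assms(8) unfolding in01_def Pmat_def by auto
  show Q: "in01 d (Qmat d lam eps d' b)" unfolding in01_def Qmat_def Amat_def by auto
  fix P' Q' assume PQ: "in01 d P' \<and> in01 d Q'"
  have "pretrain_obj d N lam eps (Pmat d d' b) (Qmat d lam eps d' b) = Lval d lam eps (Pmat d d' b) (Qmat d lam eps d' b)"
    by (rule obj_eq) (use assms P Q in auto)
  also have "\<dots> \<le> Lval d lam eps P' Q'"
    by (rule alg_main) (use assms PQ in auto)
  also have "\<dots> = pretrain_obj d N lam eps P' Q'"
    by (rule obj_eq[symmetric]) (use assms PQ in auto)
  finally show "pretrain_obj d N lam eps (Pmat d d' b) (Qmat d lam eps d' b) \<le> pretrain_obj d N lam eps P' Q'" .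
qed


end
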